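(* Let $\Pi$ be a proof structure with hypotheses $A_1,\ldots,A_n$ (labelled by strings $\alpha_1,\ldots,\alpha_n$) and conclusion $C$, whose abstract proof structure contracts, by a finite sequence $\rho$ of the contractions in the context, to a single comb with conclusion $C$ whose premiss sequence, read as a string, is $\gamma$. Then there is a natural deduction proof of $\alpha_1:A_1,\ldots,\alpha_n:A_n\vdash\gamma:C$ in the Displacement calculus.
   Context: Strings. String terms are built from a countably infinite set of variables (each of sort $0$) and a separator constant $\mathbf{1}$ by an associative concatenation $+$ (with empty string $\epsilon$). The sort of a string term is its number of occurrences of $\mathbf{1}$. For $k\in\{>,<\}\cup\{1,2,3,\ldots\}$ and strings $\alpha$ (of sort $\geq 1$, resp. $\geq k$ if $k$ is an integer) and $\beta$: write $\alpha=\alpha'+\mathbf{1}+\alpha''$ where the displayed $\mathbf{1}$ is the first occurrence of $\mathbf{1}$ if $k={>}$, the last one if $k={<}$, and the $k$-th one if $k$ is an integer; then $\alpha\times_k\beta=\alpha'+\beta+\alpha''$. Formulas. Atomic formulas have fixed sorts. Complex formulas are $A\bullet B$, $A\backslash C$, $C/B$, $A\odot_k B$, $A\downarrow_k C$, $C\uparrow_k B$ with sorts $s(A\bullet B)=s(A)+s(B)$, $s(A\backslash C)=s(C)-s(A)$, $s(C/B)=s(C)-s(B)$, $s(A\odot_k B)=s(A)+s(B)-1$, $s(A\downarrow_k C)=s(C)+1-s(A)$, $s(C\uparrow_k B)=s(C)+1-s(B)$; a formula is well formed only when all these sorts are $\geq 0$ and the wrap operations required below are defined. Natural deduction. Judgements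 are $\alpha:A$ with $\alpha$ a string of sort $s(A)$. Hypotheses (and withdrawn hypotheses) of sort $m$ are labelled $p_0+\mathbf{1}+\cdots+\mathbf{1}+p_m$ with fresh distinct variables $p_i$. Rules: $\backslash E$: from $\alpha:A$ and $\gamma:A\backslash C$ infer $\alpha+\gamma:C$; $\backslash I$: from a derivation of $\alpha+\gamma:C$ with hypothesis $\alpha:A$, withdraw it and infer $\gamma:A\backslash C$; $/E$: from $\gamma:C/B$ and $\beta:B$ infer $\gamma+\beta:C$; $/I$: from a derivation of $\gamma+\beta:C$ withdraw $\beta:B$, infer $\gamma:C/B$; $\bullet I$: from $\alpha:A,\beta:B$ infer $\alpha+\beta:A\bullet B$; $\bullet E$: from $\delta:A\bullet B$ and a derivation of $\gamma[\alpha+\beta]:C$ from hypotheses $\alpha:A,\beta:B$, withdraw these and infer $\gamma[\delta]:C$; $\downarrow_k E$: from $\alpha:A$ and $\gamma:A\downarrow_k C$ infer $\alpha\times_k\gamma:C$; $\downarrow_k I$: from a derivation of $\alpha\times_k\gamma:C$ withdraw $\alpha:A$, infer $\gamma:A\downarrow_k C$; $\uparrow_k E$: from $\gamma:C\uparrow_k B$ and $\beta:B$ infer $\gamma\times_k\beta:C$; $\uparrow_k I$: from a derivation of $\gamma\times_k\beta:C$ withdraw $\beta:B$, infer $\gamma:C\uparrow_k B$; $\odot_k I$: from $\alpha:A,\beta:B$ infer $\alpha\times_k\beta:A\odot_k B$; $\odot_k E$: from $\delta:A\odot_k B$ and a derivation of $\gamma[\alpha\times_k\beta]:C$ from $\alpha:A,\beta:B$,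 withdraw these and infer $\gamma[\delta]:C$. Links. A link joins an ordered list of premiss formulas and an ordered list of conclusion formulas. Tensor links: $[L/]$ premisses $C/B,B$, conclusion $C$, label $+$; $[L\backslash]$ premisses $A,A\backslash C$, conclusion $C$, label $+$; $[R\bullet]$ premisses $A,B$, conclusion $A\bullet B$, label $+$; $[L\uparrow_k]$ premisses $C\uparrow_k B,B$, conclusion $C$, label $\times_k$; $[L\downarrow_k]$ premisses $A, A\downarrow_k C$, conclusion $C$, label $\times_k$; $[R\odot_k]$ premisses $A,B$, conclusion $A\odot_k B$, label $\times_k$. Par links (one formula is marked as main): $[L\bullet]$ premiss $A\bullet B$ (main), conclusions $A,B$; $[L\odot_k]$ premiss $A\odot_k B$ (main), conclusions $A,B$; $[R/]$ premiss $C$, conclusions $C/B$ (main), $B$; $[R\backslash]$ premiss $C$, conclusions $A$, $A\backslash C$ (main); $[R\uparrow_k]$ premiss $C$, conclusions $C\uparrow_k B$ (main), $B$; $[R\downarrow_k]$ premiss $C$, conclusions $A$, $A\downarrow_k C$ (main). A proof structure is a set of formula occurrences and links instantiating these schemes such that each formula is premiss of at most one link and conclusion of at most one link. Its hypotheses are formulas that are conclusion of no link; its conclusions are formulas that are premiss of no link. Its auxiliary inputs are the non-main conclusions of par links (both conclusions for $[L\bullet]$, $[L\odot_k]$). Combs and abstract proof structures. A comb is a link with an ordered (possibly empty) list of premisses and one conclusion distinct from them; premisses are vertices or occurrences of the constant $\mathbf{1}$ (sort 1); the sort of a comb is the sum of the sorts of its premisses. The abstract proof structure of a proof structure is obtained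 by: replacing each $+$-labelled tensor link with premisses $v_1,v_2$ and conclusion $v_3$ by a comb with premisses $v_1,v_2$ and conclusion $v_3$; replacing each hypothesis $A_i$ of sort $m$ by an unlabelled vertex that is the conclusion of a comb with premisses $p_0,\mathbf{1},p_1,\ldots,\mathbf{1},p_m$ where $\alpha_i=p_0+\mathbf{1}+\cdots+\mathbf{1}+p_m$ with fresh distinct sort-0 variables $p_j$; replacing each auxiliary input $A$ of sort $m$ by an unlabelled vertex that is the conclusion of a comb with premisses $v_0,\mathbf{1},v_1,\ldots,\mathbf{1},v_m$, where $v_0,\ldots,v_m$ are fresh sort-0 vertices and the par link is connected to all of $v_0,\ldots,v_m$ instead of $A$ (the expansion of that auxiliary input); keeping the label of the conclusion of the structure and making all other vertices unlabelled (each keeping the sort of its formula). Contractions (sequences $\alpha_1,\alpha_2,\beta,\gamma_1,\gamma_2$ of comb premisses may be empty). $[+]$: a comb with premisses $\alpha_1,w,\alpha_2$ and conclusion $v$, where $w$ is the conclusion of a comb with premisses $\beta$, becomes one comb with premisses $\alpha_1,\beta,\alpha_2$ and conclusion $v$. $[\times_k]$: a $\times_k$ tensor link with conclusion $v$ whose first premiss is the conclusion of a comb with premisses $\alpha_1,\mathbf{1},\alpha_2$ and whose second premiss is the conclusion of a comb with premisses $\beta$ becomes a comb with premisses $\alpha_1,\beta,\alpha_2$ and conclusion $v$, where the displayed $\mathbf{1}$ is the one selected by $k$ ($\alpha_1$ of sort $0$ if $k={>}$, $\alpha_2$ of sort 0 if $k={<}$, $\alpha_1$ of sort $k-1$ if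 $k$ is an integer). In the logical contractions, a par link with main vertex $v$ (or premiss $v_1$ for $\bullet,\odot_k$) is removed together with its connections; $e_A, e_B$ denote the expansions of its auxiliary inputs. $[\backslash]$: par $[R\backslash]$ whose premiss is the conclusion of a comb with premisses $e_A,\beta$: result comb $\beta$ with conclusion $v$. $[/]$: symmetric with comb premisses $\beta,e_B$. $[\uparrow_k]$: par $[R\uparrow_k]$ whose premiss is the conclusion of a comb with premisses $\alpha_1,e_B,\alpha_2$: result comb $\alpha_1,\mathbf{1},\alpha_2$ with conclusion $v$, with the same sort restriction on $\alpha_1,\alpha_2$ as for $[\times_k]$. $[\downarrow_k]$: par $[R\downarrow_k]$ whose premiss is the conclusion of a comb with premisses $e',\beta,e''$ where $e_A=e',\mathbf{1},e''$ with the displayed $\mathbf{1}$ selected by $k$: result comb $\beta$ with conclusion $v$. $[\bullet]$: par $[L\bullet]$ with premiss $v_1$ and a comb with premisses $\gamma_1,e_A,e_B,\gamma_2$ and conclusion $v_2$: result comb $\gamma_1,v_1,\gamma_2$ with conclusion $v_2$. $[\odot_k]$: par $[L\odot_k]$ with premiss $v_1$, $e_A=e',\mathbf{1},e''$ with the $\mathbf{1}$ selected by $k$, and a comb with premisses $\gamma_1,e',e_B,e'',\gamma_2$ and conclusion $v_2$: result comb $\gamma_1,v_1,\gamma_2$ with conclusion $v_2$. *)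

theory Defs
  imports Main "HOL-Library.Multiset"
begin

datatype sym = SVar nat | Sep   (* variables (sort 0) and the separator constant 1 *)

type_synonym str = "sym list"   (* concatenation = append, empty string = [] *)

definition ssort :: "str \<Rightarrow> nat" where
  "ssort \<alpha> = length (filter (\<lambda>x. x = Sep) \<alpha>)"

definition svars :: "str \<Rightarrow> nat list" where
  "svars \<alpha> = [p. SVar p \<leftarrow> \<alpha>]"

text \<open>Wrap indices: > (first separator), < (last separator), or an integer k >= 1.\<close>
datatype wk = WFirst | WLast | WNth nat

definition sep_positions :: "str \<Rightarrow> nat list" where
  "sep_positions \<alpha> = filter (\<lambda>i. \<alpha> ! i = Sep) [0..<length \<alpha>]"

definition selsep :: "wk \<Rightarrow> str \<Rightarrow> nat option" where
  "selsep k \<alpha> = (let ps = sep_positions \<alpha> in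
     (case k of
        WFirst \<Rightarrow> (if ps = [] then None else Some (hd ps))
      | WLast \<Rightarrow> (if ps = [] then None else Some (last ps))
      | WNth n \<Rightarrow> (if 1 \<le> n \<and> n \<le> length ps then Some (ps ! (n - 1)) else None)))"

definition wrap_defined :: "wk \<Rightarrow> str \<Rightarrow> bool" where
  "wrap_defined k \<alpha> \<longleftrightarrow> selsep k \<alpha> \<noteq> None"

text \<open>alpha \<times>_k beta (meaningful only when wrap_defined k alpha).\<close>
definition swrap :: "wk \<Rightarrow> str \<Rightarrow> str \<Rightarrow> str" where
  "swrap k \<alpha> \<beta> = (case selsep k \<alpha> of
      Some i \<Rightarrow> take i \<alpha> @ \<beta> @ drop (Suc i) \<alpha>
    | None \<Rightarrow> \<alpha> @ \<beta>)"

fun hlabel :: "nat list \<Rightarrow> str" where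
  "hlabel [] = []"
| "hlabel [p] = [SVar p]"
| "hlabel (p # ps) = SVar p # Sep # hlabel ps"

definition is_hyp_label :: "str \<Rightarrow> nat \<Rightarrow> bool" where
  "is_hyp_label \<alpha> m \<longleftrightarrow> (\<exists>ps. length ps = Suc m \<and> distinct ps \<and> \<alpha> = hlabel ps)"

datatype formula =
    DAt nat nat                    (* atom: name, sort *)
  | DProd formula formula
  | DUnder formula formula         (* A \ C *)
  | DOver formula formula          (* C / B *)
  | DWrap wk formula formula       (* A \<odot>_k B *)
  | DDown wk formula formula       (* A \<down>_k C *)
  | DUp wk formula formula         (* C \<up>_k B *)

fun fsort :: "formula \<Rightarrow> nat" where
  "fsort (DAt _ s) = s"
| "fsort (DProd A B) = fsort A + fsort B"
| "fsort (DUnder A C) = fsort C - fsort A"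
| "fsort (DOver C B) = fsort C - fsort B"
| "fsort (DWrap k A B) = fsort A + fsort B - 1"
| "fsort (DDown k A C) = fsort C + 1 - fsort A"
| "fsort (DUp k C B) = fsort C + 1 - fsort B"

text \<open>A string of sort s can be wrapped with index k.\<close>
definition wrap_sort_ok :: "wk \<Rightarrow> nat \<Rightarrow> bool" where
  "wrap_sort_ok k s = (case k of WFirst \<Rightarrow> 1 \<le> s | WLast \<Rightarrow> 1 \<le> s
                                | WNth n \<Rightarrow> 1 \<le> n \<and> n \<le> s)"

fun wf :: "formula \<Rightarrow> bool" where
  "wf (DAt _ _) = True"
| "wf (DProd A B) = (wf A \<and> wf B)"
| "wf (DUnder A C) = (wf A \<and> wf C \<and> fsort A \<le> fsort C)"
| "wf (DOver C B) = (wf C \<and> wf B \<and> fsort B \<le> fsort C)"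
| "wf (DWrap k A B) = (wf A \<and> wf B \<and> wrap_sort_ok k (fsort A))"
| "wf (DDown k A C) = (wf A \<and> wf C \<and> fsort A \<le> fsort C + 1 \<and> wrap_sort_ok k (fsort A))"
| "wf (DUp k C B) = (wf C \<and> wf B \<and> fsort B \<le> fsort C + 1
                      \<and> wrap_sort_ok k (fsort C + 1 - fsort B))"

type_synonym judg = "str \<times> formula"

definition cvars :: "judg multiset \<Rightarrow> nat set" where
  "cvars \<Gamma> = (\<Union>j\<in>set_mset \<Gamma>. set (svars (fst j)))"

text \<open>ND \<Gamma> (\<gamma>, C): there is a natural deduction derivation of \<gamma> : C whose open
  (non-withdrawn) hypotheses are exactly the multiset \<Gamma>. Hypotheses (also withdrawn
  ones) carry labels with fresh distinct variables.\<close>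
inductive ND :: "judg multiset \<Rightarrow> judg \<Rightarrow> bool" where
  hyp: "is_hyp_label \<alpha> (fsort A) \<Longrightarrow> wf A \<Longrightarrow> ND {#(\<alpha>, A)#} (\<alpha>, A)"
| underE: "ND \<Gamma> (\<alpha>, A) \<Longrightarrow> ND \<Delta> (\<gamma>, DUnder A C) \<Longrightarrow> cvars \<Gamma> \<inter> cvars \<Delta> = {}
     \<Longrightarrow> ND (\<Gamma> + \<Delta>) (\<alpha> @ \<gamma>, C)"
| underI: "ND (add_mset (\<alpha>, A) \<Gamma>) (\<alpha> @ \<gamma>, C) \<Longrightarrow> is_hyp_label \<alpha> (fsort A)
     \<Longrightarrow> set (svars \<alpha>) \<inter> cvars \<Gamma> = {} \<Longrightarrow> wf (DUnder A C)
     \<Longrightarrow> ND \<Gamma> (\<gamma>, DUnder A C)"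
| overE: "ND \<Gamma> (\<gamma>, DOver C B) \<Longrightarrow> ND \<Delta> (\<beta>, B) \<Longrightarrow> cvars \<Gamma> \<inter> cvars \<Delta> = {}
     \<Longrightarrow> ND (\<Gamma> + \<Delta>) (\<gamma> @ \<beta>, C)"
| overI: "ND (add_mset (\<beta>, B) \<Gamma>) (\<gamma> @ \<beta>, C) \<Longrightarrow> is_hyp_label \<beta> (fsort B)
     \<Longrightarrow> set (svars \<beta>) \<inter> cvars \<Gamma> = {} \<Longrightarrow> wf (DOver C B)
     \<Longrightarrow> ND \<Gamma> (\<gamma>, DOver C B)"
| prodI: "ND \<Gamma> (\<alpha>, A) \<Longrightarrow> ND \<Delta> (\<beta>, B) \<Longrightarrow> cvars \<Gamma> \<inter> cvars \<Delta> = {}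
     \<Longrightarrow> ND (\<Gamma> + \<Delta>) (\<alpha> @ \<beta>, DProd A B)"
| prodE: "ND \<Delta> (\<delta>, DProd A B)
     \<Longrightarrow> ND (\<Gamma> + {#(\<alpha>, A), (\<beta>, B)#}) (\<gamma>1 @ \<alpha> @ \<beta> @ \<gamma>2, C)
     \<Longrightarrow> is_hyp_label \<alpha> (fsort A) \<Longrightarrow> is_hyp_label \<beta> (fsort B)
     \<Longrightarrow> set (svars \<alpha>) \<inter> set (svars \<beta>) = {}
     \<Longrightarrow> (set (svars \<alpha>) \<union> set (svars \<beta>)) \<inter> cvars \<Gamma> = {}
     \<Longrightarrow> cvars \<Gamma> \<inter> cvars \<Delta> = {}
     \<Longrightarrow> ND (\<Gamma> + \<Delta>) (\<gamma>1 @ \<delta> @ \<gamma>2, C)"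
| downE: "ND \<Gamma> (\<alpha>, A) \<Longrightarrow> ND \<Delta> (\<gamma>, DDown k A C) \<Longrightarrow> wrap_defined k \<alpha>
     \<Longrightarrow> cvars \<Gamma> \<inter> cvars \<Delta> = {}
     \<Longrightarrow> ND (\<Gamma> + \<Delta>) (swrap k \<alpha> \<gamma>, C)"
| downI: "ND (add_mset (\<alpha>, A) \<Gamma>) (swrap k \<alpha> \<gamma>, C) \<Longrightarrow> wrap_defined k \<alpha>
     \<Longrightarrow> is_hyp_label \<alpha> (fsort A) \<Longrightarrow> set (svars \<alpha>) \<inter> cvars \<Gamma> = {}
     \<Longrightarrow> wf (DDown k A C)
     \<Longrightarrow> ND \<Gamma> (\<gamma>, DDown k A C)"
| upE: "ND \<Gamma> (\<gamma>, DUp k C B) \<Longrightarrow> ND \<Delta> (\<beta>, B) \<Longrightarrow> wrap_defined k \<gamma>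
     \<Longrightarrow> cvars \<Gamma> \<inter> cvars \<Delta> = {}
     \<Longrightarrow> ND (\<Gamma> + \<Delta>) (swrap k \<gamma> \<beta>, C)"
| upI: "ND (add_mset (\<beta>, B) \<Gamma>) (swrap k \<gamma> \<beta>, C) \<Longrightarrow> wrap_defined k \<gamma>
     \<Longrightarrow> is_hyp_label \<beta> (fsort B) \<Longrightarrow> set (svars \<beta>) \<inter> cvars \<Gamma> = {}
     \<Longrightarrow> wf (DUp k C B)
     \<Longrightarrow> ND \<Gamma> (\<gamma>, DUp k C B)"
| wrapI: "ND \<Gamma> (\<alpha>, A) \<Longrightarrow> ND \<Delta> (\<beta>, B) \<Longrightarrow> wrap_defined k \<alpha>
     \<Longrightarrow> cvars \<Gamma> \<inter> cvars \<Delta> = {}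
     \<Longrightarrow> ND (\<Gamma> + \<Delta>) (swrap k \<alpha> \<beta>, DWrap k A B)"
| wrapE: "ND \<Delta> (\<delta>, DWrap k A B)
     \<Longrightarrow> ND (\<Gamma> + {#(\<alpha>, A), (\<beta>, B)#}) (\<gamma>1 @ swrap k \<alpha> \<beta> @ \<gamma>2, C)
     \<Longrightarrow> wrap_defined k \<alpha>
     \<Longrightarrow> is_hyp_label \<alpha> (fsort A) \<Longrightarrow> is_hyp_label \<beta> (fsort B)
     \<Longrightarrow> set (svars \<alpha>) \<inter> set (svars \<beta>) = {}
     \<Longrightarrow> (set (svars \<alpha>) \<union> set (svars \<beta>)) \<inter> cvars \<Gamma> = {}
     \<Longrightarrow> cvars \<Gamma> \<inter> cvars \<Delta> = {}
     \<Longrightarrow> ND (\<Gamma> + \<Delta>) (\<gamma>1 @ \<delta> @ \<gamma>2, C)"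

text \<open>Formula occurrences are natural numbers, labelled by lab. A link is
  (rule, ordered premisses, ordered conclusions). T* = tensor links, P* = par links.\<close>
datatype rule =
    TLOver | TLUnder | TRProd | TLUp wk | TLDown wk | TRWrap wk
  | PLProd | PLWrap wk | PROver | PRUnder | PRUp wk | PRDown wk

type_synonym link = "rule \<times> nat list \<times> nat list"

fun link_ok :: "(nat \<Rightarrow> formula) \<Rightarrow> link \<Rightarrow> bool" where
  "link_ok lab (r, ps, cs) = (case r of
     TLOver \<Rightarrow> (\<exists>a b c. ps = [a, b] \<and> cs = [c] \<and> lab a = DOver (lab c) (lab b))
   | TLUnder \<Rightarrow> (\<exists>a b c. ps = [a, b] \<and> cs = [c] \<and> lab b = DUnder (lab a) (lab c))
   | TRProd \<Rightarrow> (\<exists>a b c. ps = [a, b] \<and> cs = [c] \<and> lab c = DProd (lab a) (lab b))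
   | TLUp k \<Rightarrow> (\<exists>a b c. ps = [a, b] \<and> cs = [c] \<and> lab a = DUp k (lab c) (lab b))
   | TLDown k \<Rightarrow> (\<exists>a b c. ps = [a, b] \<and> cs = [c] \<and> lab b = DDown k (lab a) (lab c))
   | TRWrap k \<Rightarrow> (\<exists>a b c. ps = [a, b] \<and> cs = [c] \<and> lab c = DWrap k (lab a) (lab b))
   | PLProd \<Rightarrow> (\<exists>a b c. ps = [c] \<and> cs = [a, b] \<and> lab c = DProd (lab a) (lab b))
   | PLWrap k \<Rightarrow> (\<exists>a b c. ps = [c] \<and> cs = [a, b] \<and> lab c = DWrap k (lab a) (lab b))
   | PROver \<Rightarrow> (\<exists>m b c. ps = [c] \<and> cs = [m, b] \<and> lab m = DOver (lab c) (lab b))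
   | PRUnder \<Rightarrow> (\<exists>a m c. ps = [c] \<and> cs = [a, m] \<and> lab m = DUnder (lab a) (lab c))
   | PRUp k \<Rightarrow> (\<exists>m b c. ps = [c] \<and> cs = [m, b] \<and> lab m = DUp k (lab c) (lab b))
   | PRDown k \<Rightarrow> (\<exists>a m c. ps = [c] \<and> cs = [a, m] \<and> lab m = DDown k (lab a) (lab c)))"

definition proof_structure :: "nat set \<Rightarrow> (nat \<Rightarrow> formula) \<Rightarrow> link set \<Rightarrow> bool" where
  "proof_structure V lab links \<longleftrightarrow>
     finite V \<and> finite links \<and> (\<forall>v\<in>V. wf (lab v)) \<and>
     (\<forall>(r, ps, cs)\<in>links. link_ok lab (r, ps, cs) \<and> distinct (ps @ cs) \<and> set (ps @ cs) \<subseteq> V) \<and>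
     (\<forall>v. \<forall>l1\<in>links. \<forall>l2\<in>links. v \<in> set (fst (snd l1)) \<longrightarrow> v \<in> set (fst (snd l2)) \<longrightarrow> l1 = l2) \<and>
     (\<forall>v. \<forall>l1\<in>links. \<forall>l2\<in>links. v \<in> set (snd (snd l1)) \<longrightarrow> v \<in> set (snd (snd l2)) \<longrightarrow> l1 = l2)"

definition ps_hyps :: "nat set \<Rightarrow> link set \<Rightarrow> nat set" where
  "ps_hyps V links = {v \<in> V. \<not> (\<exists>l\<in>links. v \<in> set (snd (snd l)))}"

definition ps_concls :: "nat set \<Rightarrow> link set \<Rightarrow> nat set" where
  "ps_concls V links = {v \<in> V. \<not> (\<exists>l\<in>links. v \<in> set (fst (snd l)))}"

fun is_par :: "rule \<Rightarrow> bool" where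
  "is_par PLProd = True" | "is_par (PLWrap _) = True" | "is_par PROver = True"
| "is_par PRUnder = True" | "is_par (PRUp _) = True" | "is_par (PRDown _) = True"
| "is_par _ = False"

text \<open>Auxiliary inputs: non-main conclusions of par links.\<close>
fun aux_inputs :: "link \<Rightarrow> nat list" where
  "aux_inputs (r, ps, cs) = (case r of
      PLProd \<Rightarrow> cs | PLWrap _ \<Rightarrow> cs
    | PROver \<Rightarrow> [cs ! 1] | PRUnder \<Rightarrow> [cs ! 0]
    | PRUp _ \<Rightarrow> [cs ! 1] | PRDown _ \<Rightarrow> [cs ! 0]
    | _ \<Rightarrow> [])"

text \<open>Vertices: original formula occurrences, and the fresh sort-0 vertices
  Exp u j (j = 0..m) of the expansion of the auxiliary input u.\<close>
datatype avtx = Orig nat | Exp nat nat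

datatype item = ISym sym | IV avtx

datatype parlink =
    LProdL avtx "item list" "item list"          (* [L\<bullet>]: premiss (main), e_A, e_B *)
  | LWrapL wk avtx "item list" "item list"       (* [L\<odot>_k]: premiss (main), e_A, e_B *)
  | ROverL avtx avtx "item list"                 (* [R/]: premiss, main C/B, e_B *)
  | RUnderL avtx "item list" avtx                (* [R\]: premiss, e_A, main A\C *)
  | RUpL wk avtx avtx "item list"                (* [R\<up>_k]: premiss, main, e_B *)
  | RDownL wk avtx "item list" avtx              (* [R\<down>_k]: premiss, e_A, main *)

record aps =
  a_combs :: "(item list \<times> avtx) set"            (* (premisses, conclusion) *)
  a_tens :: "(wk \<times> avtx \<times> avtx \<times> avtx) set"     (* \<times>_k tensor: k, premiss1, premiss2, concl *)
  a_pars :: "parlink set"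

definition expn :: "nat \<Rightarrow> nat \<Rightarrow> item list" where
  "expn u m = IV (Exp u 0) # concat (map (\<lambda>j. [ISym Sep, IV (Exp u j)]) [1..<Suc m])"

fun par_of :: "(nat \<Rightarrow> formula) \<Rightarrow> link \<Rightarrow> parlink" where
  "par_of lab (r, ps, cs) = (let ex = (\<lambda>u. expn u (fsort (lab u))) in
     case r of
       PLProd \<Rightarrow> LProdL (Orig (ps ! 0)) (ex (cs ! 0)) (ex (cs ! 1))
     | PLWrap k \<Rightarrow> LWrapL k (Orig (ps ! 0)) (ex (cs ! 0)) (ex (cs ! 1))
     | PROver \<Rightarrow> ROverL (Orig (ps ! 0)) (Orig (cs ! 0)) (ex (cs ! 1))
     | PRUnder \<Rightarrow> RUnderL (Orig (ps ! 0)) (ex (cs ! 0)) (Orig (cs ! 1))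
     | PRUp k \<Rightarrow> RUpL k (Orig (ps ! 0)) (Orig (cs ! 0)) (ex (cs ! 1))
     | PRDown k \<Rightarrow> RDownL k (Orig (ps ! 0)) (ex (cs ! 0)) (Orig (cs ! 1))
     | _ \<Rightarrow> undefined)"

text \<open>The abstract proof structure of (V, lab, links), hypothesis v labelled by hl v.\<close>
definition aps_of :: "nat set \<Rightarrow> (nat \<Rightarrow> formula) \<Rightarrow> link set \<Rightarrow> (nat \<Rightarrow> str) \<Rightarrow> aps" where
  "aps_of V lab links hl = \<lparr>
     a_combs =
       {([IV (Orig (ps ! 0)), IV (Orig (ps ! 1))], Orig (cs ! 0)) | r ps cs.
           (r, ps, cs) \<in> links \<and> r \<in> {TLOver, TLUnder, TRProd}}
       \<union> {(map ISym (hl h), Orig h) | h. h \<in> ps_hyps V links}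
       \<union> {(expn u (fsort (lab u)), Orig u) | u l. l \<in> links \<and> u \<in> set (aux_inputs l)},
     a_tens = {(k, Orig (ps ! 0), Orig (ps ! 1), Orig (cs ! 0)) | k r ps cs.
           (r, ps, cs) \<in> links \<and> (r = TLUp k \<or> r = TLDown k \<or> r = TRWrap k)},
     a_pars = {par_of lab l | l. l \<in> links \<and> is_par (fst l)} \<rparr>"

fun avsort :: "(nat \<Rightarrow> formula) \<Rightarrow> avtx \<Rightarrow> nat" where
  "avsort lab (Orig v) = fsort (lab v)"
| "avsort lab (Exp _ _) = 0"

fun isort :: "(avtx \<Rightarrow> nat) \<Rightarrow> item \<Rightarrow> nat" where
  "isort vs (ISym Sep) = 1"
| "isort vs (ISym (SVar _)) = 0"
| "isort vs (IV v) = vs v"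

definition lsort :: "(avtx \<Rightarrow> nat) \<Rightarrow> item list \<Rightarrow> nat" where
  "lsort vs xs = sum_list (map (isort vs) xs)"

text \<open>The 1 between a1 and a2 is the one selected by k.\<close>
definition sel_ok :: "(avtx \<Rightarrow> nat) \<Rightarrow> wk \<Rightarrow> item list \<Rightarrow> item list \<Rightarrow> bool" where
  "sel_ok vs k a1 a2 = (case k of
      WFirst \<Rightarrow> lsort vs a1 = 0
    | WLast \<Rightarrow> lsort vs a2 = 0
    | WNth n \<Rightarrow> 1 \<le> n \<and> lsort vs a1 = n - 1)"

inductive contract :: "(avtx \<Rightarrow> nat) \<Rightarrow> aps \<Rightarrow> aps \<Rightarrow> bool" for vs where
  plus: "(a1 @ [IV w] @ a2, v) \<in> a_combs X \<Longrightarrow> (b, w) \<in> a_combs X \<Longrightarrow> w \<noteq> v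
    \<Longrightarrow> contract vs X (X\<lparr>a_combs := insert (a1 @ b @ a2, v)
                           (a_combs X - {(a1 @ [IV w] @ a2, v), (b, w)})\<rparr>)"
| times: "(k, v1, v2, v) \<in> a_tens X \<Longrightarrow> (a1 @ [ISym Sep] @ a2, v1) \<in> a_combs X
    \<Longrightarrow> (b, v2) \<in> a_combs X \<Longrightarrow> sel_ok vs k a1 a2 \<Longrightarrow> v1 \<noteq> v2
    \<Longrightarrow> contract vs X (X\<lparr>a_tens := a_tens X - {(k, v1, v2, v)},
          a_combs := insert (a1 @ b @ a2, v)
                       (a_combs X - {(a1 @ [ISym Sep] @ a2, v1), (b, v2)})\<rparr>)"
| under: "RUnderL v1 eA v \<in> a_pars X \<Longrightarrow> (eA @ b, v1) \<in> a_combs X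
    \<Longrightarrow> contract vs X (X\<lparr>a_pars := a_pars X - {RUnderL v1 eA v},
          a_combs := insert (b, v) (a_combs X - {(eA @ b, v1)})\<rparr>)"
| over: "ROverL v1 v eB \<in> a_pars X \<Longrightarrow> (b @ eB, v1) \<in> a_combs X
    \<Longrightarrow> contract vs X (X\<lparr>a_pars := a_pars X - {ROverL v1 v eB},
          a_combs := insert (b, v) (a_combs X - {(b @ eB, v1)})\<rparr>)"
| up: "RUpL k v1 v eB \<in> a_pars X \<Longrightarrow> (a1 @ eB @ a2, v1) \<in> a_combs X \<Longrightarrow> sel_ok vs k a1 a2
    \<Longrightarrow> contract vs X (X\<lparr>a_pars := a_pars X - {RUpL k v1 v eB},
          a_combs := insert (a1 @ [ISym Sep] @ a2, v) (a_combs X - {(a1 @ eB @ a2, v1)})\<rparr>)"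
| down: "RDownL k v1 eA v \<in> a_pars X \<Longrightarrow> eA = e1 @ [ISym Sep] @ e2 \<Longrightarrow> sel_ok vs k e1 e2
    \<Longrightarrow> (e1 @ b @ e2, v1) \<in> a_combs X
    \<Longrightarrow> contract vs X (X\<lparr>a_pars := a_pars X - {RDownL k v1 eA v},
          a_combs := insert (b, v) (a_combs X - {(e1 @ b @ e2, v1)})\<rparr>)"
| prod: "LProdL v1 eA eB \<in> a_pars X \<Longrightarrow> (g1 @ eA @ eB @ g2, v2) \<in> a_combs X
    \<Longrightarrow> contract vs X (X\<lparr>a_pars := a_pars X - {LProdL v1 eA eB},
          a_combs := insert (g1 @ [IV v1] @ g2, v2) (a_combs X - {(g1 @ eA @ eB @ g2, v2)})\<rparr>)"
| wrap: "LWrapL k v1 eA eB \<in> a_pars X \<Longrightarrow> eA = e1 @ [ISym Sep] @ e2 \<Longrightarrow> sel_ok vs k e1 e2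
    \<Longrightarrow> (g1 @ e1 @ eB @ e2 @ g2, v2) \<in> a_combs X
    \<Longrightarrow> contract vs X (X\<lparr>a_pars := a_pars X - {LWrapL k v1 eA eB},
          a_combs := insert (g1 @ [IV v1] @ g2, v2)
                       (a_combs X - {(g1 @ e1 @ eB @ e2 @ g2, v2)})\<rparr>)"

end

theory Submission
  imports Defs "HOL-Library.Nat_Bijection"
begin

lemma ssort_append[simp]: "ssort (x @ y) = ssort x + ssort y"
  by (simp add: ssort_def)
lemma ssort_Cons[simp]: "ssort (a # y) = (if a = Sep then 1 else 0) + ssort y"
  by (simp add: ssort_def)
lemma ssort_Nil[simp]: "ssort [] = 0"
  by (simp add: ssort_def)
lemma svars_append[simp]: "svars (x @ y) = svars x @ svars y"
  by (simp add: svars_def)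
lemma svars_Nil[simp]: "svars [] = []"
  by (simp add: svars_def)
lemma svars_Cons_Sep[simp]: "svars (Sep # y) = svars y"
  by (simp add: svars_def)
lemma svars_Cons_Var[simp]: "svars (SVar p # y) = p # svars y"
  by (simp add: svars_def)

lemma hlabel_snoc: "xs \<noteq> [] \<Longrightarrow> hlabel (xs @ [y]) = hlabel xs @ [Sep, SVar y]"
  by (induction xs rule: hlabel.induct) auto

lemma svars_hlabel[simp]: "svars (hlabel ps) = ps"
  by (induction ps rule: hlabel.induct) auto

lemma ssort_hlabel[simp]: "ssort (hlabel ps) = length ps - 1"
  by (induction ps rule: hlabel.induct) auto

lemma hyp_label_svars: "is_hyp_label \<alpha> m \<Longrightarrow> svars \<alpha> \<noteq> [] \<and> distinct (svars \<alpha>) \<and> ssort \<alpha> = m"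
  unfolding is_hyp_label_def by auto

lemma length_sep_positions: "length (sep_positions x) = ssort x"
proof -
  have "length (filter (\<lambda>i. x ! i = Sep) [0..<length x]) = length (filter (\<lambda>a. a = Sep) (map ((!) x) [0..<length x]))"
    by (simp add: filter_map o_def)
  also have "map ((!) x) [0..<length x] = x" by (rule map_nth)
  finally show ?thesis by (simp add: sep_positions_def ssort_def)
qed

lemma sep_positions_split:
  "sep_positions (x @ Sep # y) = sep_positions x @ length x # map (\<lambda>i. i + Suc (length x)) (sep_positions y)"
proof -
  have u: "[0..<length (x @ Sep # y)] = [0..<length x] @ [length x] @ map (\<lambda>i. i + Suc (length x)) [0..<length y]"
  proof -
    have "[0..<length (x @ Sep # y)] = [0..<length x] @ [length x..<length x + Suc (length y)]"
      using upt_add_eq_append[of 0 "length x" "Suc (length y)"] by simp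
    also have "[length x..<length x + Suc (length y)] = length x # [Suc (length x)..<length y + Suc (length x)]"
      by (metis add.commute add_Suc_right less_add_Suc1 upt_conv_Cons)
    also have "[Suc (length x)..<length y + Suc (length x)] = map (\<lambda>i. i + Suc (length x)) [0..<length y]"
      by (simp only: map_add_upt)
    finally show ?thesis by simp
  qed
  have a: "filter (\<lambda>i. (x @ Sep # y) ! i = Sep) [0..<length x] = filter (\<lambda>i. x ! i = Sep) [0..<length x]"
    by (rule filter_cong) (auto simp: nth_append)
  have b: "filter (\<lambda>i. (x @ Sep # y) ! i = Sep) (map (\<lambda>i. i + Suc (length x)) [0..<length y])
        = map (\<lambda>i. i + Suc (length x)) (filter (\<lambda>i. y ! i = Sep) [0..<length y])"
    by (simp add: filter_map o_def nth_append)
  show ?thesis unfolding sep_positions_def u filter_append a b by simp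
qed

definition selc :: "wk \<Rightarrow> nat \<Rightarrow> nat \<Rightarrow> bool" where
  "selc k s1 s2 = (case k of WFirst \<Rightarrow> s1 = 0 | WLast \<Rightarrow> s2 = 0 | WNth n \<Rightarrow> 1 \<le> n \<and> s1 = n - 1)"

lemma selsep_split:
  assumes "selc k (ssort x) (ssort y)"
  shows "selsep k (x @ Sep # y) = Some (length x)"
proof -
  have L: "length (sep_positions x) = ssort x" "length (sep_positions y) = ssort y"
    by (simp_all add: length_sep_positions)
  show ?thesis
  proof (cases k)
    case WFirst
    then have "sep_positions x = []" using assms L by (simp add: selc_def)
    then show ?thesis using WFirst by (simp add: selsep_def sep_positions_split)
  next
    case WLast
    then have "sep_positions y = []" using assms L by (simp add: selc_def)
    then show ?thesis using WLast by (simp add: selsep_def sep_positions_split)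
  next
    case (WNth n)
    then have n: "1 \<le> n" "length (sep_positions x) = n - 1" using assms L by (auto simp: selc_def)
    then have "n - 1 < length (sep_positions x @ length x # map (\<lambda>i. i + Suc (length x)) (sep_positions y))"
      by simp
    moreover have "(sep_positions x @ length x # map (\<lambda>i. i + Suc (length x)) (sep_positions y)) ! (n - 1) = length x"
      using n by (simp add: nth_append)
    ultimately show ?thesis using WNth n by (simp add: selsep_def sep_positions_split Let_def)
  qed
qed

lemma swrap_split:
  assumes "selc k (ssort x) (ssort y)"
  shows "swrap k (x @ Sep # y) b = x @ b @ y" and "wrap_defined k (x @ Sep # y)"
  using selsep_split[OF assms] by (simp_all add: swrap_def wrap_defined_def)


fun itemvars :: "(nat \<Rightarrow> nat \<Rightarrow> nat) \<Rightarrow> item \<Rightarrow> nat list" where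
  "itemvars ev (ISym (SVar p)) = [p]"
| "itemvars ev (ISym Sep) = []"
| "itemvars ev (IV (Orig n)) = []"
| "itemvars ev (IV (Exp u j)) = [ev u j]"

definition varl :: "(nat \<Rightarrow> nat \<Rightarrow> nat) \<Rightarrow> item list \<Rightarrow> nat list" where
  "varl ev xs = concat (map (itemvars ev) xs)"

fun origi :: "item \<Rightarrow> nat list" where
  "origi (IV (Orig n)) = [n]" | "origi (ISym s) = []" | "origi (IV (Exp u j)) = []"

definition origs :: "item list \<Rightarrow> nat list" where
  "origs xs = concat (map origi xs)"

fun insti :: "(nat \<Rightarrow> nat \<Rightarrow> nat) \<Rightarrow> (nat \<Rightarrow> judg multiset \<times> str) \<Rightarrow> item \<Rightarrow> str" where
  "insti ev f (ISym s) = [s]"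
| "insti ev f (IV (Orig n)) = snd (f n)"
| "insti ev f (IV (Exp u j)) = [SVar (ev u j)]"

definition inst :: "(nat \<Rightarrow> nat \<Rightarrow> nat) \<Rightarrow> (nat \<Rightarrow> judg multiset \<times> str) \<Rightarrow> item list \<Rightarrow> str" where
  "inst ev f xs = concat (map (insti ev f) xs)"

definition Sc :: "(nat \<Rightarrow> judg multiset \<times> str) \<Rightarrow> item list \<Rightarrow> judg multiset" where
  "Sc f xs = sum_list (map (\<lambda>n. fst (f n)) (origs xs))"

lemma varl_simps[simp]: "varl ev [] = []" "varl ev (a # xs) = itemvars ev a @ varl ev xs"
  "varl ev (xs @ ys) = varl ev xs @ varl ev ys"
  by (simp_all add: varl_def)
lemma origs_simps[simp]: "origs [] = []" "origs (a # xs) = origi a @ origs xs"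
  "origs (xs @ ys) = origs xs @ origs ys"
  by (simp_all add: origs_def)
lemma inst_simps[simp]: "inst ev f [] = []" "inst ev f (a # xs) = insti ev f a @ inst ev f xs"
  "inst ev f (xs @ ys) = inst ev f xs @ inst ev f ys"
  by (simp_all add: inst_def)
lemma Sc_simps[simp]: "Sc f [] = {#}" "Sc f (xs @ ys) = Sc f xs + Sc f ys"
  "Sc f (IV (Orig n) # xs) = fst (f n) + Sc f xs"
  "Sc f (ISym s # xs) = Sc f xs" "Sc f (IV (Exp u j) # xs) = Sc f xs"
  by (simp_all add: Sc_def)

lemma lsort_simps[simp]: "lsort vs [] = 0" "lsort vs (a # xs) = isort vs a + lsort vs xs"
  "lsort vs (xs @ ys) = lsort vs xs + lsort vs ys"
  by (simp_all add: lsort_def)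

lemma ssort_inst:
  assumes "\<forall>n\<in>set (origs xs). ssort (snd (f n)) = fsort (lab n)"
  shows "ssort (inst ev f xs) = lsort (avsort lab) xs"
  using assms
proof (induction xs)
  case Nil then show ?case by simp
next
  case (Cons a xs)
  then show ?case
    by (cases "(undefined::nat\<Rightarrow>nat\<Rightarrow>nat, a)" rule: itemvars.cases) auto
qed

lemma inst_cong: "\<forall>n\<in>set (origs xs). f n = g n \<Longrightarrow> inst ev f xs = inst ev g xs"
proof (induction xs)
  case (Cons a xs) then show ?case by (cases a rule: origi.cases) auto
qed simp

lemma Sc_cong: "\<forall>n\<in>set (origs xs). f n = g n \<Longrightarrow> Sc f xs = Sc g xs"
  by (simp add: Sc_def cong: map_cong)

lemma inst_noorig: "origs xs = [] \<Longrightarrow> inst ev f xs = inst ev g xs"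
  by (rule inst_cong) simp

lemma expn_Suc: "expn u (Suc m) = expn u m @ [ISym Sep, IV (Exp u (Suc m))]"
  by (simp add: expn_def)

lemma expn_facts:
  "varl ev (expn u m) = map (ev u) [0..<Suc m]"
  "origs (expn u m) = []"
  "inst ev f (expn u m) = hlabel (map (ev u) [0..<Suc m])"
  "lsort (avsort lab) (expn u m) = m"
  "ISym (SVar p) \<notin> set (expn u m)"
  "IV (Orig n) \<notin> set (expn u m)"
proof (induction m)
  case 0
  { case 1 show ?case by (simp add: expn_def) }
  { case 2 show ?case by (simp add: expn_def) }
  { case 3 show ?case by (simp add: expn_def) }
  { case 4 show ?case by (simp add: expn_def) }
  { case 5 show ?case by (simp add: expn_def) }
  { case 6 show ?case by (simp add: expn_def) }
next
  case (Suc m)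
  { case 1 show ?case using Suc by (simp add: expn_Suc) }
  { case 2 show ?case using Suc by (simp add: expn_Suc) }
  { case 3 show ?case using Suc hlabel_snoc[of "map (ev u) [0..<Suc m]" "ev u (Suc m)"]
      by (simp add: expn_Suc del: upt_Suc) (metis map_append list.simps(8,9) upt_Suc_append zero_le) }
  { case 4 show ?case using Suc by (simp add: expn_Suc) }
  { case 5 show ?case using Suc by (simp add: expn_Suc) }
  { case 6 show ?case using Suc by (simp add: expn_Suc) }
qed

lemma cvars_simps[simp]: "cvars {#} = {}" "cvars (A + B) = cvars A \<union> cvars B"
  "cvars (add_mset j A) = set (svars (fst j)) \<union> cvars A"
  by (auto simp: cvars_def)

lemma cvars_sum_list: "cvars (sum_list (map g ns)) = (\<Union>n\<in>set ns. cvars (g n))"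
  by (induction ns) auto

lemma cvars_Sc: "cvars (Sc f xs) = (\<Union>n\<in>set (origs xs). cvars (fst (f n)))"
  by (simp add: Sc_def cvars_sum_list)

lemma cvars_mset_set: "finite F \<Longrightarrow> cvars (mset_set F) = (\<Union>j\<in>F. set (svars (fst j)))"
  by (simp add: cvars_def)


fun lprem :: "parlink \<Rightarrow> avtx option" where
  "lprem (LProdL v1 _ _) = Some v1" | "lprem (LWrapL _ v1 _ _) = Some v1" | "lprem _ = None"

fun rmain :: "parlink \<Rightarrow> avtx option" where
  "rmain (ROverL _ v _) = Some v" | "rmain (RUnderL _ _ v) = Some v"
| "rmain (RUpL _ _ v _) = Some v" | "rmain (RDownL _ _ _ v) = Some v" | "rmain _ = None"

locale PSL =
  fixes V :: "nat set" and lab :: "nat \<Rightarrow> formula" and links :: "link set"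
    and hs :: "nat list" and hl :: "nat \<Rightarrow> str"
  assumes ps: "proof_structure V lab links"
    and dhs: "distinct hs" and shs: "set hs = ps_hyps V links"
    and hlab: "\<forall>h\<in>set hs. is_hyp_label (hl h) (fsort (lab h))"
    and dvar: "distinct (concat (map (\<lambda>h. svars (hl h)) hs))"
begin

definition HV where "HV = (\<Union>h\<in>set hs. set (svars (hl h)))"
definition NN where "NN = Suc (Max (insert 0 HV))"
definition ev :: "nat \<Rightarrow> nat \<Rightarrow> nat" where "ev u j = NN + prod_encode (u, j)"
definition EVR where "EVR = {x. \<exists>u j. x = ev u j}"
definition aj :: "nat \<Rightarrow> judg" where
  "aj u = (hlabel (map (ev u) [0..<Suc (fsort (lab u))]), lab u)"
definition AUXV where "AUXV = {u. \<exists>l\<in>links. u \<in> set (aux_inputs l)}"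
definition HJ where "HJ = (\<lambda>h. (hl h, lab h)) ` set hs"
definition Jall where "Jall = HJ \<union> aj ` AUXV"
definition ovl where "ovl j xs \<longleftrightarrow> set (svars (fst j)) \<inter> set (varl ev xs) \<noteq> {}"
definition Hc where "Hc xs = mset_set {j \<in> Jall. ovl j xs}"
definition vs where "vs = avsort lab"
definition X0 where "X0 = aps_of V lab links hl"
definition ZZ where "ZZ X = EVR - (\<Union>(\<pi>, v)\<in>a_combs X. set (varl ev \<pi>))"
definition good where "good Z f xs \<longleftrightarrow>
   (\<forall>n\<in>set (origs xs). ND (fst (f n)) (snd (f n), lab n) \<and> ssort (snd (f n)) = fsort (lab n)
       \<and> cvars (fst (f n)) \<inter> (set (varl ev xs) \<union> Z) = {})
 \<and> (\<forall>n1\<in>set (origs xs). \<forall>n2\<in>set (origs xs). n1 \<noteq> n2 \<longrightarrow> cvars (fst (f n1)) \<inter> cvars (fst (f n2)) = {})"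
fun labv where "labv (Orig n) = lab n" | "labv (Exp u j) = undefined"
definition Mn where "Mn Z xs v \<longleftrightarrow> (\<forall>f. good Z f xs \<longrightarrow> ND (Hc xs + Sc f xs) (inst ev f xs, labv v))"

lemma fin_links: "finite links" and fin_V: "finite V" and wfV: "\<And>v. v \<in> V \<Longrightarrow> wf (lab v)"
  using ps by (auto simp: proof_structure_def)

lemma link_ok: "(r, ps, cs) \<in> links \<Longrightarrow> link_ok lab (r, ps, cs) \<and> distinct (ps @ cs) \<and> set (ps @ cs) \<subseteq> V"
  using ps unfolding proof_structure_def by blast

lemma concl_unique: "l1 \<in> links \<Longrightarrow> l2 \<in> links \<Longrightarrow> x \<in> set (snd (snd l1)) \<Longrightarrow> x \<in> set (snd (snd l2)) \<Longrightarrow> l1 = l2"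
  using ps unfolding proof_structure_def by blast

lemma prem_unique: "l1 \<in> links \<Longrightarrow> l2 \<in> links \<Longrightarrow> x \<in> set (fst (snd l1)) \<Longrightarrow> x \<in> set (fst (snd l2)) \<Longrightarrow> l1 = l2"
  using ps unfolding proof_structure_def by blast

lemma ev_inj: "ev u j = ev u' j' \<longleftrightarrow> u = u' \<and> j = j'"
  by (simp add: ev_def prod_encode_eq)

lemma fin_HV: "finite HV" by (simp add: HV_def)

lemma HV_EVR: "HV \<inter> EVR = {}"
proof -
  { fix x assume "x \<in> HV"
    then have "x \<le> Max (insert 0 HV)" using fin_HV by simp
    then have "x < NN" by (simp add: NN_def) }
  then show ?thesis by (auto simp: EVR_def ev_def)
qed

lemma ev_EVR[simp]: "ev u j \<in> EVR" by (auto simp: EVR_def)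

lemma hl_ok: "h \<in> set hs \<Longrightarrow> svars (hl h) \<noteq> [] \<and> distinct (svars (hl h)) \<and> ssort (hl h) = fsort (lab h)"
  using hlab hyp_label_svars by blast

lemma distinct_concat_disj: "distinct (concat (map g xs)) \<Longrightarrow> x \<in> set xs \<Longrightarrow> y \<in> set xs \<Longrightarrow> x \<noteq> y
   \<Longrightarrow> set (g x) \<inter> set (g y) = {}"
  by (induction xs) auto

lemma hl_disj: "h1 \<in> set hs \<Longrightarrow> h2 \<in> set hs \<Longrightarrow> h1 \<noteq> h2 \<Longrightarrow> set (svars (hl h1)) \<inter> set (svars (hl h2)) = {}"
  using distinct_concat_disj[OF dvar] by blast

lemma svars_aj: "svars (fst (aj u)) = map (ev u) [0..<Suc (fsort (lab u))]"
  by (simp add: aj_def)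

lemma fin_AUXV: "finite AUXV"
proof -
  have "AUXV = (\<Union>l\<in>links. set (aux_inputs l))" by (auto simp: AUXV_def)
  then show ?thesis using fin_links by simp
qed

lemma fin_Jall: "finite Jall"
  using fin_AUXV by (simp add: Jall_def HJ_def)

lemma Jall_nonempty: "j \<in> Jall \<Longrightarrow> set (svars (fst j)) \<noteq> {}"
  using hl_ok by (auto simp: Jall_def HJ_def svars_aj)

lemma Jall_disj: "j1 \<in> Jall \<Longrightarrow> j2 \<in> Jall \<Longrightarrow> j1 \<noteq> j2 \<Longrightarrow> set (svars (fst j1)) \<inter> set (svars (fst j2)) = {}"
proof -
  have hv: "h \<in> set hs \<Longrightarrow> set (svars (hl h)) \<subseteq> HV" for h by (auto simp: HV_def)
  have av: "set (svars (fst (aj u))) \<subseteq> EVR" for u by (auto simp: svars_aj simp del: upt_Suc)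
  have aax: "u1 \<noteq> u2 \<Longrightarrow> set (svars (fst (aj u1))) \<inter> set (svars (fst (aj u2))) = {}" for u1 u2
    by (auto simp: svars_aj ev_inj simp del: upt_Suc)
  assume a: "j1 \<in> Jall" "j2 \<in> Jall" "j1 \<noteq> j2"
  consider (hh) h1 h2 where "h1 \<in> set hs" "h2 \<in> set hs" "j1 = (hl h1, lab h1)" "j2 = (hl h2, lab h2)"
    | (ha) h1 u2 where "h1 \<in> set hs" "j1 = (hl h1, lab h1)" "j2 = aj u2"
    | (ah) u1 h2 where "h2 \<in> set hs" "j2 = (hl h2, lab h2)" "j1 = aj u1"
    | (aa) u1 u2 where "j1 = aj u1" "j2 = aj u2"
    using a(1,2) unfolding Jall_def HJ_def by blast
  then show ?thesis
  proof cases
    case hh then show ?thesis using a(3) hl_disj by auto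
  next
    case ha then show ?thesis using hv[of h1] av[of u2] HV_EVR by auto
  next
    case ah then show ?thesis using hv[of h2] av[of u1] HV_EVR by auto
  next
    case aa then show ?thesis using a(3) aax[of u1 u2] by auto
  qed
qed

lemma aj_in: "u \<in> AUXV \<Longrightarrow> aj u \<in> Jall" by (simp add: Jall_def)

end

lemma varl_map_ISym[simp]: "varl ev (map ISym s) = svars s"
  by (induction s) (auto simp: svars_def split: sym.splits)
lemma origs_map_ISym[simp]: "origs (map ISym s) = []"
  by (induction s) auto
lemma inst_map_ISym[simp]: "inst ev f (map ISym s) = s"
  by (induction s) auto
lemma lsort_map_ISym[simp]: "lsort vs (map ISym s) = ssort s"
proof (induction s)
  case (Cons a s) then show ?case by (cases a) auto
qed simp
lemma ISym_SVar_in_map: "ISym (SVar p) \<in> set (map ISym s) \<longleftrightarrow> p \<in> set (svars s)"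
  by (induction s) (auto simp: svars_def split: sym.splits)

context PSL
begin

lemma combs0_cases:
  assumes "(\<pi>, v) \<in> a_combs X0"
  obtains (tens) r a b cc where "(r, [a, b], [cc]) \<in> links" "\<pi> = [IV (Orig a), IV (Orig b)]" "v = Orig cc"
      "r = TLOver \<and> lab a = DOver (lab cc) (lab b) \<or> r = TLUnder \<and> lab b = DUnder (lab a) (lab cc)
       \<or> r = TRProd \<and> lab cc = DProd (lab a) (lab b)"
  | (hyp) h where "h \<in> set hs" "\<pi> = map ISym (hl h)" "v = Orig h"
  | (aux) u l where "l \<in> links" "u \<in> set (aux_inputs l)" "\<pi> = expn u (fsort (lab u))" "v = Orig u"
proof -
  consider (1) r ps cs where "(r, ps, cs) \<in> links" "r \<in> {TLOver, TLUnder, TRProd}"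
      "\<pi> = [IV (Orig (ps ! 0)), IV (Orig (ps ! 1))]" "v = Orig (cs ! 0)"
    | (2) h where "h \<in> ps_hyps V links" "\<pi> = map ISym (hl h)" "v = Orig h"
    | (3) u l where "l \<in> links" "u \<in> set (aux_inputs l)" "\<pi> = expn u (fsort (lab u))" "v = Orig u"
    using assms unfolding X0_def aps_of_def by auto
  then show ?thesis
  proof cases
    case 1
    then have "link_ok lab (r, ps, cs)" using link_ok by blast
    then show ?thesis using 1 that(1) by auto
  next
    case 2 then show ?thesis using that(2) shs by auto
  next
    case 3 then show ?thesis using that(3) by auto
  qed
qed

lemma tens0_cases:
  assumes "(k, v1, v2, v) \<in> a_tens X0"
  obtains r a b cc where "(r, [a, b], [cc]) \<in> links" "v1 = Orig a" "v2 = Orig b" "v = Orig cc"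
      "r = TLUp k \<and> lab a = DUp k (lab cc) (lab b) \<or> r = TLDown k \<and> lab b = DDown k (lab a) (lab cc)
       \<or> r = TRWrap k \<and> lab cc = DWrap k (lab a) (lab b)"
proof -
  obtain r ps cs where 1: "(r, ps, cs) \<in> links" "r = TLUp k \<or> r = TLDown k \<or> r = TRWrap k"
      "v1 = Orig (ps ! 0)" "v2 = Orig (ps ! 1)" "v = Orig (cs ! 0)"
    using assms unfolding X0_def aps_of_def by auto
  then have "link_ok lab (r, ps, cs)" using link_ok by blast
  then show ?thesis using 1 that by auto
qed

lemma pars0_link: "p \<in> a_pars X0 \<Longrightarrow> \<exists>l\<in>links. is_par (fst l) \<and> p = par_of lab l"
  unfolding X0_def aps_of_def by (simp del: par_of.simps) (metis fst_conv)

lemma pars0_cases: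
  assumes "p \<in> a_pars X0"
  obtains (prod) cc a b where "p = LProdL (Orig cc) (expn a (fsort (lab a))) (expn b (fsort (lab b)))"
      "(PLProd, [cc], [a, b]) \<in> links" "lab cc = DProd (lab a) (lab b)"
  | (wrap) k cc a b where "p = LWrapL k (Orig cc) (expn a (fsort (lab a))) (expn b (fsort (lab b)))"
      "(PLWrap k, [cc], [a, b]) \<in> links" "lab cc = DWrap k (lab a) (lab b)"
  | (over) cc m b where "p = ROverL (Orig cc) (Orig m) (expn b (fsort (lab b)))"
      "(PROver, [cc], [m, b]) \<in> links" "lab m = DOver (lab cc) (lab b)"
  | (under) cc a m where "p = RUnderL (Orig cc) (expn a (fsort (lab a))) (Orig m)"
      "(PRUnder, [cc], [a, m]) \<in> links" "lab m = DUnder (lab a) (lab cc)"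
  | (up) k cc m b where "p = RUpL k (Orig cc) (Orig m) (expn b (fsort (lab b)))"
      "(PRUp k, [cc], [m, b]) \<in> links" "lab m = DUp k (lab cc) (lab b)"
  | (down) k cc a m where "p = RDownL k (Orig cc) (expn a (fsort (lab a))) (Orig m)"
      "(PRDown k, [cc], [a, m]) \<in> links" "lab m = DDown k (lab a) (lab cc)"
proof -
  obtain r ps cs where 1: "(r, ps, cs) \<in> links" "is_par r" "p = par_of lab (r, ps, cs)"
    using pars0_link[OF assms] by auto
  then have "link_ok lab (r, ps, cs)" using link_ok by blast
  then show ?thesis using 1 that by (cases r) (auto simp: Let_def)
qed

lemma par_of_rmain: "l \<in> links \<Longrightarrow> is_par (fst l) \<Longrightarrow> rmain (par_of lab l) = Some v
   \<Longrightarrow> \<exists>x. v = Orig x \<and> x \<in> set (snd (snd l)) \<and> x \<notin> set (aux_inputs l)"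
proof -
  assume a: "l \<in> links" "is_par (fst l)" "rmain (par_of lab l) = Some v"
  obtain r ps cs where l: "l = (r, ps, cs)" by (cases l)
  then have "link_ok lab (r, ps, cs)" "distinct (ps @ cs)" using link_ok a by blast+
  then show ?thesis using a l by (cases r) (auto simp: Let_def)
qed

lemma par_of_lprem: "l \<in> links \<Longrightarrow> is_par (fst l) \<Longrightarrow> lprem (par_of lab l) = Some v
   \<Longrightarrow> \<exists>x. v = Orig x \<and> x \<in> set (fst (snd l))"
proof -
  assume a: "l \<in> links" "is_par (fst l)" "lprem (par_of lab l) = Some v"
  obtain r ps cs where l: "l = (r, ps, cs)" by (cases l)
  then have "link_ok lab (r, ps, cs)" using link_ok a by blast
  then show ?thesis using a l by (cases r) (auto simp: Let_def)
qed

lemma aux_concl: "l \<in> links \<Longrightarrow> u \<in> set (aux_inputs l) \<Longrightarrow> u \<in> set (snd (snd l)) \<and> is_par (fst l)"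
proof -
  assume a: "l \<in> links" "u \<in> set (aux_inputs l)"
  obtain r ps cs where l: "l = (r, ps, cs)" by (cases l)
  then have "link_ok lab (r, ps, cs)" using link_ok a by blast
  then show ?thesis using a l by (cases r) auto
qed

lemma rmain_unique: "p1 \<in> a_pars X0 \<Longrightarrow> p2 \<in> a_pars X0 \<Longrightarrow> rmain p1 = Some v \<Longrightarrow> rmain p2 = Some v \<Longrightarrow> p1 = p2"
  by (metis concl_unique option.inject avtx.inject(1) par_of_rmain pars0_link)

lemma lprem_unique: "p1 \<in> a_pars X0 \<Longrightarrow> p2 \<in> a_pars X0 \<Longrightarrow> lprem p1 = Some v \<Longrightarrow> lprem p2 = Some v \<Longrightarrow> p1 = p2"
  by (metis prem_unique avtx.inject(1) par_of_lprem pars0_link)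

lemma tens_concl_unique: "(k1, a1, b1, v) \<in> a_tens X0 \<Longrightarrow> (k2, a2, b2, v) \<in> a_tens X0 \<Longrightarrow> (k1, a1, b1) = (k2, a2, b2)"
proof -
  assume t: "(k1, a1, b1, v) \<in> a_tens X0" "(k2, a2, b2, v) \<in> a_tens X0"
  obtain r a b cc where 1: "(r, [a, b], [cc]) \<in> links" "a1 = Orig a" "b1 = Orig b" "v = Orig cc"
      "r = TLUp k1 \<or> r = TLDown k1 \<or> r = TRWrap k1"
    using tens0_cases[OF t(1)] by metis
  obtain r' a' b' cc' where 2: "(r', [a', b'], [cc']) \<in> links" "a2 = Orig a'" "b2 = Orig b'" "v = Orig cc'"
      "r' = TLUp k2 \<or> r' = TLDown k2 \<or> r' = TRWrap k2"
    using tens0_cases[OF t(2)] by metis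
  have "(r, [a, b], [cc]) = (r', [a', b'], [cc'])"
    using concl_unique[OF 1(1) 2(1)] 1(4) 2(4) by simp
  then show ?thesis using 1 2 by auto
qed

lemma tens_rmain: "(k, a1, b1, v) \<in> a_tens X0 \<Longrightarrow> p \<in> a_pars X0 \<Longrightarrow> rmain p = Some v \<Longrightarrow> False"
proof -
  assume t: "(k, a1, b1, v) \<in> a_tens X0" "p \<in> a_pars X0" "rmain p = Some v"
  obtain r a b cc where 1: "(r, [a, b], [cc]) \<in> links" "v = Orig cc"
      "r = TLUp k \<or> r = TLDown k \<or> r = TRWrap k"
    using tens0_cases[OF t(1)] by metis
  obtain l where l: "l \<in> links" "is_par (fst l)" "p = par_of lab l" using pars0_link t(2) by blast
  then obtain x where "v = Orig x" "x \<in> set (snd (snd l))" using par_of_rmain t(3) by blast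
  then have "l = (r, [a, b], [cc])" using concl_unique[OF l(1) 1(1)] 1(2) by simp
  then show False using l(2) 1(3) by auto
qed

end

lemma svars_mem: "p \<in> set (svars s) \<longleftrightarrow> SVar p \<in> set s"
  by (induction s) (auto simp: svars_def split: sym.splits)

context PSL
begin

definition combok :: "aps \<Rightarrow> item list \<Rightarrow> avtx \<Rightarrow> bool" where
  "combok X \<pi> v \<longleftrightarrow> (\<exists>n. v = Orig n) \<and> distinct (varl ev \<pi>) \<and> distinct (origs \<pi>) \<and> lsort vs \<pi> = vs v
       \<and> (\<forall>p. ISym (SVar p) \<in> set \<pi> \<longrightarrow> p \<in> HV)
       \<and> (\<forall>j\<in>Jall. ovl j \<pi> \<longrightarrow> set (svars (fst j)) \<subseteq> set (varl ev \<pi>))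
       \<and> Mn (ZZ X) \<pi> v"

definition Inv :: "aps \<Rightarrow> bool" where
  "Inv X \<longleftrightarrow> a_tens X \<subseteq> a_tens X0 \<and> a_pars X \<subseteq> a_pars X0 \<and>
   (\<forall>\<pi> v. (\<pi>, v) \<in> a_combs X \<longrightarrow> combok X \<pi> v) \<and>
   (\<forall>\<pi>1 v1 \<pi>2 v2. (\<pi>1, v1) \<in> a_combs X \<longrightarrow> (\<pi>2, v2) \<in> a_combs X \<longrightarrow> (\<pi>1, v1) \<noteq> (\<pi>2, v2) \<longrightarrow>
       v1 \<noteq> v2 \<and> set (varl ev \<pi>1) \<inter> set (varl ev \<pi>2) = {} \<and> set (origs \<pi>1) \<inter> set (origs \<pi>2) = {}) \<and>
   (\<forall>p\<in>a_pars X. \<forall>v1. lprem p = Some v1 \<longrightarrow> (\<forall>\<pi> v. (\<pi>, v) \<in> a_combs X \<longrightarrow> IV v1 \<notin> set \<pi>)) \<and>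
   (\<forall>k v1 v2 v. (k, v1, v2, v) \<in> a_tens X \<longrightarrow> v \<notin> snd ` a_combs X) \<and>
   (\<forall>p\<in>a_pars X. \<forall>v. rmain p = Some v \<longrightarrow> v \<notin> snd ` a_combs X) \<and>
   HV \<subseteq> (\<Union>(\<pi>, v)\<in>a_combs X. set (varl ev \<pi>))"

lemma Hc_empty: "varl ev xs = [] \<Longrightarrow> Hc xs = {#}"
  by (simp add: Hc_def ovl_def)

lemma ovl_single: "j0 \<in> Jall \<Longrightarrow> set (varl ev xs) = set (svars (fst j0)) \<Longrightarrow> {j\<in>Jall. ovl j xs} = {j0}"
proof -
  assume a: "j0 \<in> Jall" "set (varl ev xs) = set (svars (fst j0))"
  have "j \<in> Jall \<Longrightarrow> ovl j xs \<Longrightarrow> j = j0" for j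
    using Jall_disj[OF _ a(1), of j] a(2) unfolding ovl_def by blast
  moreover have "ovl j0 xs" using a Jall_nonempty[OF a(1)] by (simp add: ovl_def)
  ultimately show ?thesis using a(1) by blast
qed

lemma Hc_single: "j0 \<in> Jall \<Longrightarrow> set (varl ev xs) = set (svars (fst j0)) \<Longrightarrow> Hc xs = {#j0#}"
  by (simp add: Hc_def ovl_single)

lemma HJ_in: "h \<in> set hs \<Longrightarrow> (hl h, lab h) \<in> Jall"
  by (simp add: Jall_def HJ_def)

lemma hyps_V: "h \<in> set hs \<Longrightarrow> h \<in> V \<and> (\<forall>l\<in>links. h \<notin> set (snd (snd l)))"
  using shs by (auto simp: ps_hyps_def)

lemma link_V: "(r, ps, cs) \<in> links \<Longrightarrow> x \<in> set ps \<or> x \<in> set cs \<Longrightarrow> x \<in> V"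
  using link_ok by fastforce

lemma AUXV_I: "l \<in> links \<Longrightarrow> u \<in> set (aux_inputs l) \<Longrightarrow> u \<in> AUXV"
  by (auto simp: AUXV_def)

lemma aux_V: "l \<in> links \<Longrightarrow> u \<in> set (aux_inputs l) \<Longrightarrow> u \<in> V"
  by (metis aux_concl link_V prod.collapse)

lemma distinct_ev: "distinct (map (ev u) xs) \<longleftrightarrow> distinct xs"
  by (simp add: distinct_map inj_on_def ev_inj)

lemma hyp_label_aj: "is_hyp_label (hlabel (map (ev u) [0..<Suc m])) m"
  unfolding is_hyp_label_def by (rule exI[of _ "map (ev u) [0..<Suc m]"]) (simp add: distinct_ev del: upt_Suc)

lemma good_origs: "good Z f xs \<Longrightarrow> n \<in> set (origs xs) \<Longrightarrow> ND (fst (f n)) (snd (f n), lab n)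
   \<and> ssort (snd (f n)) = fsort (lab n) \<and> cvars (fst (f n)) \<inter> (set (varl ev xs) \<union> Z) = {}"
  by (simp add: good_def)

lemma good_pair: "good Z f xs \<Longrightarrow> n1 \<in> set (origs xs) \<Longrightarrow> n2 \<in> set (origs xs) \<Longrightarrow> n1 \<noteq> n2
   \<Longrightarrow> cvars (fst (f n1)) \<inter> cvars (fst (f n2)) = {}"
  by (simp add: good_def)

lemma combok0:
  assumes "(\<pi>, v) \<in> a_combs X0"
  shows "combok X0 \<pi> v"
  using assms
proof (cases rule: combs0_cases)
  case (tens r a b cc)
  have d: "distinct [a, b, cc]" and V: "a \<in> V" "b \<in> V" "cc \<in> V"
    using link_ok[OF tens(1)] by auto
  have Hc: "Hc \<pi> = {#}" using tens by (simp add: Hc_empty)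
  have wfa: "wf (lab a)" "wf (lab b)" "wf (lab cc)" using V wfV by auto
  have ls: "lsort vs \<pi> = vs v" using tens(2-4) wfa by (auto simp: vs_def)
  have M: "Mn Z \<pi> v" for Z
    unfolding Mn_def
  proof (intro allI impI)
    fix f assume g: "good Z f \<pi>"
    have Da: "ND (fst (f a)) (snd (f a), lab a)" and Db: "ND (fst (f b)) (snd (f b), lab b)"
      using good_origs[OF g] tens(2) by auto
    have dj: "cvars (fst (f a)) \<inter> cvars (fst (f b)) = {}"
      using good_pair[OF g, of a b] tens(2) d by auto
    have e: "Hc \<pi> + Sc f \<pi> = fst (f a) + fst (f b)" "inst ev f \<pi> = snd (f a) @ snd (f b)"
      using Hc tens(2) by auto
    have "ND (fst (f a) + fst (f b)) (snd (f a) @ snd (f b), lab cc)"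
      using tens(4)
    proof (elim disjE conjE)
      assume "lab a = DOver (lab cc) (lab b)"
      then show ?thesis using ND.overE[OF _ Db dj, of "snd (f a)" "lab cc"] Da tens(3) by simp
    next
      assume "lab b = DUnder (lab a) (lab cc)"
      then show ?thesis using ND.underE[OF Da _ dj, of "snd (f b)" "lab cc"] Db tens(3) by simp
    next
      assume "lab cc = DProd (lab a) (lab b)"
      then show ?thesis using ND.prodI[OF Da Db dj] tens(3) by simp
    qed
    then show "ND (Hc \<pi> + Sc f \<pi>) (inst ev f \<pi>, labv v)" unfolding e using tens(3) by simp
  qed
  show ?thesis unfolding combok_def using tens d ls M
    by (auto simp: ovl_def)
next
  case (hyp h)
  have ok: "svars (hl h) \<noteq> [] \<and> distinct (svars (hl h)) \<and> ssort (hl h) = fsort (lab h)"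
    using hl_ok hyp by blast
  have Hc: "Hc \<pi> = {#(hl h, lab h)#}" using Hc_single[OF HJ_in[OF hyp(1)]] hyp by simp
  have ov: "\<forall>j\<in>Jall. ovl j \<pi> \<longrightarrow> set (svars (fst j)) \<subseteq> set (varl ev \<pi>)"
  proof (intro ballI impI)
    fix j assume "j \<in> Jall" "ovl j \<pi>"
    then have "j = (hl h, lab h)" using ovl_single[OF HJ_in[OF hyp(1)], of \<pi>] hyp by auto
    then show "set (svars (fst j)) \<subseteq> set (varl ev \<pi>)" using hyp by simp
  qed
  have M: "Mn Z \<pi> v" for Z
    unfolding Mn_def
  proof (intro allI impI)
    fix f
    have "ND {#(hl h, lab h)#} (hl h, lab h)"
      using ND.hyp hlab hyp(1) wfV hyps_V by blast
    then show "ND (Hc \<pi> + Sc f \<pi>) (inst ev f \<pi>, labv v)" using Hc hyp by (simp add: Sc_def)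
  qed
  show ?thesis unfolding combok_def using hyp ok ov M
    by (auto simp: vs_def ISym_SVar_in_map HV_def svars_mem)
next
  case (aux u l)
  let ?m = "fsort (lab u)"
  have uA: "u \<in> AUXV" using aux AUXV_I by blast
  have vv: "set (varl ev \<pi>) = set (svars (fst (aj u)))" using aux by (simp add: expn_facts svars_aj)
  have Hc: "Hc \<pi> = {#aj u#}" using Hc_single[OF aj_in[OF uA] vv] .
  have ov: "\<forall>j\<in>Jall. ovl j \<pi> \<longrightarrow> set (svars (fst j)) \<subseteq> set (varl ev \<pi>)"
  proof (intro ballI impI)
    fix j assume "j \<in> Jall" "ovl j \<pi>"
    then have "j = aj u" using ovl_single[OF aj_in[OF uA] vv] by auto
    then show "set (svars (fst j)) \<subseteq> set (varl ev \<pi>)" using vv by simp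
  qed
  have M: "Mn Z \<pi> v" for Z
    unfolding Mn_def
  proof (intro allI impI)
    fix f
    have "ND {#aj u#} (aj u)"
      unfolding aj_def using ND.hyp hyp_label_aj wfV aux_V aux by blast
    then show "ND (Hc \<pi> + Sc f \<pi>) (inst ev f \<pi>, labv v)" using Hc aux
      by (simp add: Sc_def expn_facts aj_def)
  qed
  show ?thesis unfolding combok_def using aux M ov
    by (auto simp: vs_def expn_facts distinct_ev simp del: upt_Suc)
qed

end

context PSL
begin

lemma combs0_concl:
  assumes c1: "(\<pi>1, v) \<in> a_combs X0" and c2: "(\<pi>2, v) \<in> a_combs X0"
  shows "\<pi>1 = \<pi>2"
  using c1
proof (cases rule: combs0_cases)
  case (tens r a b cc)
  show ?thesis using c2
  proof (cases rule: combs0_cases)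
    case (tens r' a' b' cc')
    then show ?thesis using concl_unique[OF \<open>(r, [a, b], [cc]) \<in> links\<close> \<open>(r', [a', b'], [cc']) \<in> links\<close>]
      \<open>v = Orig cc\<close> \<open>\<pi>1 = _\<close> by auto
  next
    case (hyp h) then show ?thesis using tens hyps_V by fastforce
  next
    case (aux u l)
    then have "u \<in> set (snd (snd l))" "is_par (fst l)" using aux_concl by auto
    then have "l = (r, [a, b], [cc])" using concl_unique[OF aux(1) tens(1)] aux tens by auto
    then show ?thesis using tens(4) \<open>is_par (fst l)\<close> by auto
  qed
next
  case (hyp h)
  show ?thesis using c2
  proof (cases rule: combs0_cases)
    case (tens r' a' b' cc') then show ?thesis using hyp hyps_V by fastforce
  next
    case (hyp h') then show ?thesis using \<open>\<pi>1 = _\<close> \<open>v = Orig h\<close> by auto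
  next
    case (aux u l) then show ?thesis using hyp hyps_V aux_concl by fastforce
  qed
next
  case (aux u l)
  show ?thesis using c2
  proof (cases rule: combs0_cases)
    case (tens r a b cc)
    have "u \<in> set (snd (snd l))" "is_par (fst l)" using aux aux_concl by auto
    then have "l = (r, [a, b], [cc])" using concl_unique[OF aux(1) tens(1)] aux tens by auto
    then show ?thesis using tens(4) \<open>is_par (fst l)\<close> by auto
  next
    case (hyp h) then show ?thesis using aux hyps_V aux_concl by fastforce
  next
    case (aux u' l') then show ?thesis using \<open>\<pi>1 = _\<close> \<open>v = Orig u\<close> by auto
  qed
qed

lemma combs0_info:
  assumes "(\<pi>, v) \<in> a_combs X0"
  shows "(\<exists>r a b cc. (r, [a, b], [cc]) \<in> links \<and> \<not> is_par r \<and> varl ev \<pi> = [] \<and> origs \<pi> = [a, b] \<and> v = Orig cc)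
    \<or> (\<exists>h. h \<in> set hs \<and> set (varl ev \<pi>) = set (svars (hl h)) \<and> origs \<pi> = [] \<and> v = Orig h)
    \<or> (\<exists>u. set (varl ev \<pi>) = ev u ` {0..<Suc (fsort (lab u))} \<and> origs \<pi> = [] \<and> v = Orig u)"
  using assms
proof (cases rule: combs0_cases)
  case (tens r a b cc) then show ?thesis by auto
next
  case (hyp h) then show ?thesis by auto
next
  case (aux u l) then show ?thesis by (auto simp: expn_facts simp del: upt_Suc)
qed

lemma combs0_disj:
  assumes c1: "(\<pi>1, v1) \<in> a_combs X0" and c2: "(\<pi>2, v2) \<in> a_combs X0" and ne: "(\<pi>1, v1) \<noteq> (\<pi>2, v2)"
  shows "v1 \<noteq> v2 \<and> set (varl ev \<pi>1) \<inter> set (varl ev \<pi>2) = {} \<and> set (origs \<pi>1) \<inter> set (origs \<pi>2) = {}"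
proof -
  have vne: "v1 \<noteq> v2" using combs0_concl c1 c2 ne by blast
  have hv: "h \<in> set hs \<Longrightarrow> set (svars (hl h)) \<subseteq> HV" for h by (auto simp: HV_def)
  have evr: "ev u ` A \<subseteq> EVR" for u A by auto
  note HV_EVR
  show ?thesis
    using combs0_info[OF c1] combs0_info[OF c2]
  proof (elim disjE exE conjE)
    fix r a b cc r' a' b' cc'
    assume l1: "(r, [a, b], [cc]) \<in> links" and l2: "(r', [a', b'], [cc']) \<in> links"
      and o: "origs \<pi>1 = [a, b]" "origs \<pi>2 = [a', b']" "v1 = Orig cc" "v2 = Orig cc'" "varl ev \<pi>1 = []"
    have "set [a, b] \<inter> set [a', b'] = {}"
    proof (rule ccontr)
      assume "set [a, b] \<inter> set [a', b'] \<noteq> {}"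
      then obtain x where "x \<in> set [a, b]" "x \<in> set [a', b']" by blast
      then have "(r, [a, b], [cc]) = (r', [a', b'], [cc'])" using prem_unique[OF l1 l2] by auto
      then show False using vne o by auto
    qed
    then show ?thesis using vne o by auto
  next
    fix h h' assume "h \<in> set hs" "h' \<in> set hs" "v1 = Orig h" "v2 = Orig h'"
      "set (varl ev \<pi>1) = set (svars (hl h))" "set (varl ev \<pi>2) = set (svars (hl h'))"
      "origs \<pi>1 = []"
    then show ?thesis using vne hl_disj[of h h'] by auto
  next
    fix h u assume "h \<in> set hs" "set (varl ev \<pi>1) = set (svars (hl h))"
      "set (varl ev \<pi>2) = ev u ` {0..<Suc (fsort (lab u))}" "origs \<pi>1 = []"
    then show ?thesis using vne hv[of h] evr[of u] HV_EVR by auto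
  next
    fix h u assume "h \<in> set hs" "set (varl ev \<pi>2) = set (svars (hl h))"
      "set (varl ev \<pi>1) = ev u ` {0..<Suc (fsort (lab u))}" "origs \<pi>1 = []"
    then show ?thesis using vne hv[of h] evr[of u] HV_EVR by auto
  next
    fix u u' assume "set (varl ev \<pi>1) = ev u ` {0..<Suc (fsort (lab u))}"
      "set (varl ev \<pi>2) = ev u' ` {0..<Suc (fsort (lab u'))}" "origs \<pi>1 = []" "v1 = Orig u" "v2 = Orig u'"
    then show ?thesis using vne by (auto simp: ev_inj)
  qed (use vne in auto)
qed

lemma Inv0: "Inv X0"
proof -
  have lp: "\<forall>p\<in>a_pars X0. \<forall>v1. lprem p = Some v1 \<longrightarrow> (\<forall>\<pi> v. (\<pi>, v) \<in> a_combs X0 \<longrightarrow> IV v1 \<notin> set \<pi>)"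
  proof (intro ballI allI impI)
    fix p v1 \<pi> v assume p: "p \<in> a_pars X0" "lprem p = Some v1" and c: "(\<pi>, v) \<in> a_combs X0"
    obtain l where l: "l \<in> links" "is_par (fst l)" "p = par_of lab l" using pars0_link p(1) by blast
    then obtain x where x: "v1 = Orig x" "x \<in> set (fst (snd l))" using par_of_lprem p(2) by blast
    show "IV v1 \<notin> set \<pi>" using c
    proof (cases rule: combs0_cases)
      case (tens r a b cc)
      show ?thesis
      proof
        assume "IV v1 \<in> set \<pi>"
        then have "x \<in> set [a, b]" using tens x by auto
        then have "l = (r, [a, b], [cc])" using prem_unique[OF l(1) tens(1)] x by auto
        then show False using l(2) tens(4) by auto
      qed
    next
      case (hyp h) then show ?thesis using x by auto
    next
      case (aux u l') then show ?thesis using x expn_facts by auto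
    qed
  qed
  have tc: "\<forall>k v1 v2 v. (k, v1, v2, v) \<in> a_tens X0 \<longrightarrow> v \<notin> snd ` a_combs X0"
  proof (intro allI impI)
    fix k v1 v2 v assume t: "(k, v1, v2, v) \<in> a_tens X0"
    obtain r a b cc where 1: "(r, [a, b], [cc]) \<in> links" "v = Orig cc"
        "r = TLUp k \<or> r = TLDown k \<or> r = TRWrap k"
      using tens0_cases[OF t] by metis
    show "v \<notin> snd ` a_combs X0"
    proof
      assume "v \<in> snd ` a_combs X0"
      then obtain \<pi> where c: "(\<pi>, v) \<in> a_combs X0" by auto
      then show False
      proof (cases rule: combs0_cases)
        case (tens r' a' b' cc')
        then have "(r, [a, b], [cc]) = (r', [a', b'], [cc'])" using concl_unique[OF 1(1) tens(1)] 1(2) by auto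
        then show False using 1(3) tens(4) by auto
      next
        case (hyp h) then show False using 1 hyps_V by fastforce
      next
        case (aux u l)
        then have "u \<in> set (snd (snd l))" "is_par (fst l)" using aux_concl by auto
        then have "l = (r, [a, b], [cc])" using concl_unique[OF aux(1) 1(1)] aux 1 by auto
        then show False using 1(3) \<open>is_par (fst l)\<close> by auto
      qed
    qed
  qed
  have rm: "\<forall>p\<in>a_pars X0. \<forall>v. rmain p = Some v \<longrightarrow> v \<notin> snd ` a_combs X0"
  proof (intro ballI allI impI)
    fix p v assume p: "p \<in> a_pars X0" "rmain p = Some v"
    obtain l where l: "l \<in> links" "is_par (fst l)" "p = par_of lab l" using pars0_link p(1) by blast
    then obtain x where x: "v = Orig x" "x \<in> set (snd (snd l))" "x \<notin> set (aux_inputs l)"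
      using par_of_rmain p(2) by blast
    show "v \<notin> snd ` a_combs X0"
    proof
      assume "v \<in> snd ` a_combs X0"
      then obtain \<pi> where c: "(\<pi>, v) \<in> a_combs X0" by auto
      then show False
      proof (cases rule: combs0_cases)
        case (tens r' a' b' cc')
        then have "l = (r', [a', b'], [cc'])" using concl_unique[OF l(1) tens(1)] x by auto
        then show False using l(2) tens(4) by auto
      next
        case (hyp h) then show False using l x hyps_V by fastforce
      next
        case (aux u l')
        then have "u \<in> set (snd (snd l'))" using aux_concl by auto
        then have "l' = l" using concl_unique[OF aux(1) l(1)] aux x by auto
        then show False using aux x by auto
      qed
    qed
  qed
  have hv: "HV \<subseteq> (\<Union>(\<pi>, v)\<in>a_combs X0. set (varl ev \<pi>))"
  proof
    fix p assume "p \<in> HV"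
    then obtain h where h: "h \<in> set hs" "p \<in> set (svars (hl h))" by (auto simp: HV_def)
    then have "(map ISym (hl h), Orig h) \<in> a_combs X0" using shs unfolding X0_def aps_of_def by auto
    then show "p \<in> (\<Union>(\<pi>, v)\<in>a_combs X0. set (varl ev \<pi>))" using h by force
  qed
  show ?thesis unfolding Inv_def using combok0 combs0_disj lp tc rm hv by blast
qed

end

context PSL
begin

definition ovsub :: "item list \<Rightarrow> bool" where
  "ovsub xs \<longleftrightarrow> (\<forall>j\<in>Jall. ovl j xs \<longrightarrow> set (svars (fst j)) \<subseteq> set (varl ev xs))"

lemma Hc_cvars: "ovsub xs \<Longrightarrow> cvars (Hc xs) \<subseteq> set (varl ev xs)"
  using fin_Jall by (auto simp: Hc_def cvars_mset_set ovsub_def)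

lemma Hc_split:
  assumes "set (varl ev xs) = set (varl ev ys) \<union> set (varl ev zs)"
    and "set (varl ev ys) \<inter> set (varl ev zs) = {}" and "ovsub ys" and "ovsub zs"
  shows "Hc xs = Hc ys + Hc zs"
proof -
  have e: "{j\<in>Jall. ovl j xs} = {j\<in>Jall. ovl j ys} \<union> {j\<in>Jall. ovl j zs}"
    using assms(1) by (auto simp: ovl_def)
  have d: "{j\<in>Jall. ovl j ys} \<inter> {j\<in>Jall. ovl j zs} = {}"
    using assms(2-4) by (auto simp: ovl_def ovsub_def)
  show ?thesis unfolding Hc_def e using fin_Jall d by (simp add: mset_set_Union)
qed

lemma ovsub_split:
  assumes "set (varl ev xs) = set (varl ev ys) \<union> set (varl ev zs)" "ovsub ys" "ovsub zs"
  shows "ovsub xs"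
  using assms by (auto simp: ovsub_def ovl_def)

lemma ovsub_eA: "u \<in> AUXV \<Longrightarrow> set (varl ev xs) = set (svars (fst (aj u))) \<Longrightarrow> ovsub xs \<and> Hc xs = {#aj u#}"
proof -
  assume a: "u \<in> AUXV" "set (varl ev xs) = set (svars (fst (aj u)))"
  have "ovsub xs" unfolding ovsub_def
  proof (intro ballI impI)
    fix j assume "j \<in> Jall" "ovl j xs"
    then have "j = aj u" using ovl_single[OF aj_in[OF a(1)] a(2)] by auto
    then show "set (svars (fst j)) \<subseteq> set (varl ev xs)" using a by simp
  qed
  then show ?thesis using Hc_single[OF aj_in[OF a(1)] a(2)] by simp
qed

lemma ovsub_empty: "varl ev xs = [] \<Longrightarrow> ovsub xs"
  by (simp add: ovsub_def ovl_def)

lemma good_mono: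
  assumes "good Z' f xs" "Z \<subseteq> Z'" "set (origs ys) \<subseteq> set (origs xs)" "set (varl ev ys) \<subseteq> set (varl ev xs) \<union> Z'"
  shows "good Z f ys"
  using assms unfolding good_def by blast

lemma Mn_mono: "Mn Z xs v \<Longrightarrow> Z \<subseteq> Z' \<Longrightarrow> Mn Z' xs v"
  unfolding Mn_def using good_mono[of Z' _ xs Z xs] by blast

lemma combok_mono: "combok X \<pi> v \<Longrightarrow> ZZ X \<subseteq> ZZ X' \<Longrightarrow> combok X' \<pi> v"
  unfolding combok_def using Mn_mono by blast

lemma ZZ_mono: "(\<Union>(\<pi>, v)\<in>a_combs X'. set (varl ev \<pi>)) \<subseteq> (\<Union>(\<pi>, v)\<in>a_combs X. set (varl ev \<pi>)) \<Longrightarrow> ZZ X \<subseteq> ZZ X'"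
  unfolding ZZ_def by blast

lemma InvD:
  assumes "Inv X"
  shows "a_tens X \<subseteq> a_tens X0" "a_pars X \<subseteq> a_pars X0"
    "\<And>\<pi> v. (\<pi>, v) \<in> a_combs X \<Longrightarrow> combok X \<pi> v"
    "\<And>\<pi>1 v1 \<pi>2 v2. (\<pi>1, v1) \<in> a_combs X \<Longrightarrow> (\<pi>2, v2) \<in> a_combs X \<Longrightarrow> (\<pi>1, v1) \<noteq> (\<pi>2, v2) \<Longrightarrow>
       v1 \<noteq> v2 \<and> set (varl ev \<pi>1) \<inter> set (varl ev \<pi>2) = {} \<and> set (origs \<pi>1) \<inter> set (origs \<pi>2) = {}"
    "\<And>p v1 \<pi> v. p \<in> a_pars X \<Longrightarrow> lprem p = Some v1 \<Longrightarrow> (\<pi>, v) \<in> a_combs X \<Longrightarrow> IV v1 \<notin> set \<pi>"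
    "\<And>k v1 v2 v. (k, v1, v2, v) \<in> a_tens X \<Longrightarrow> v \<notin> snd ` a_combs X"
    "\<And>p v. p \<in> a_pars X \<Longrightarrow> rmain p = Some v \<Longrightarrow> v \<notin> snd ` a_combs X"
    "HV \<subseteq> (\<Union>(\<pi>, v)\<in>a_combs X. set (varl ev \<pi>))"
proof -
  note A = assms[unfolded Inv_def]
  show "a_tens X \<subseteq> a_tens X0" using A by (elim conjE)
  show "a_pars X \<subseteq> a_pars X0" using A by (elim conjE)
  show "\<And>\<pi> v. (\<pi>, v) \<in> a_combs X \<Longrightarrow> combok X \<pi> v"
    using A[THEN conjunct2, THEN conjunct2, THEN conjunct1] by blast
  show "\<And>\<pi>1 v1 \<pi>2 v2. (\<pi>1, v1) \<in> a_combs X \<Longrightarrow> (\<pi>2, v2) \<in> a_combs X \<Longrightarrow> (\<pi>1, v1) \<noteq> (\<pi>2, v2) \<Longrightarrow>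
       v1 \<noteq> v2 \<and> set (varl ev \<pi>1) \<inter> set (varl ev \<pi>2) = {} \<and> set (origs \<pi>1) \<inter> set (origs \<pi>2) = {}"
    using A[THEN conjunct2, THEN conjunct2, THEN conjunct2, THEN conjunct1] by blast
  show "\<And>p v1 \<pi> v. p \<in> a_pars X \<Longrightarrow> lprem p = Some v1 \<Longrightarrow> (\<pi>, v) \<in> a_combs X \<Longrightarrow> IV v1 \<notin> set \<pi>"
    using A[THEN conjunct2, THEN conjunct2, THEN conjunct2, THEN conjunct2, THEN conjunct1] by blast
  show "\<And>k v1 v2 v. (k, v1, v2, v) \<in> a_tens X \<Longrightarrow> v \<notin> snd ` a_combs X"
    using A[THEN conjunct2, THEN conjunct2, THEN conjunct2, THEN conjunct2, THEN conjunct2, THEN conjunct1] by blast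
  show "\<And>p v. p \<in> a_pars X \<Longrightarrow> rmain p = Some v \<Longrightarrow> v \<notin> snd ` a_combs X"
    using A[THEN conjunct2, THEN conjunct2, THEN conjunct2, THEN conjunct2, THEN conjunct2, THEN conjunct2, THEN conjunct1] by blast
  show "HV \<subseteq> (\<Union>(\<pi>, v)\<in>a_combs X. set (varl ev \<pi>))"
    using A[THEN conjunct2, THEN conjunct2, THEN conjunct2, THEN conjunct2, THEN conjunct2, THEN conjunct2, THEN conjunct2] by blast
qed

lemma combokD:
  assumes "combok X \<pi> v"
  shows "\<exists>n. v = Orig n" "distinct (varl ev \<pi>)" "distinct (origs \<pi>)" "lsort vs \<pi> = vs v"
    "\<And>p. ISym (SVar p) \<in> set \<pi> \<Longrightarrow> p \<in> HV" "ovsub \<pi>" "Mn (ZZ X) \<pi> v"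
  using assms unfolding combok_def ovsub_def by auto

lemma combokI:
  assumes "\<exists>n. v = Orig n" "distinct (varl ev \<pi>)" "distinct (origs \<pi>)" "lsort vs \<pi> = vs v"
    "\<And>p. ISym (SVar p) \<in> set \<pi> \<Longrightarrow> p \<in> HV" "ovsub \<pi>" "Mn (ZZ X) \<pi> v"
  shows "combok X \<pi> v"
  using assms unfolding combok_def ovsub_def by auto

lemma step_frame:
  assumes I: "Inv X"
    and C: "a_combs X' = insert (\<pi>n, vn) (a_combs X - R)" and R: "R \<subseteq> a_combs X"
    and T: "a_tens X' \<subseteq> a_tens X" and P: "a_pars X' \<subseteq> a_pars X"
    and ok: "combok X' \<pi>n vn"
    and vars: "set (varl ev \<pi>n) \<subseteq> (\<Union>(\<pi>, v)\<in>R. set (varl ev \<pi>))"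
    and HVn: "HV \<inter> (\<Union>(\<pi>, v)\<in>R. set (varl ev \<pi>)) \<subseteq> set (varl ev \<pi>n)"
    and orn: "\<And>\<pi> v. (\<pi>, v) \<in> a_combs X - R \<Longrightarrow> set (origs \<pi>n) \<inter> set (origs \<pi>) = {}"
    and concl: "vn \<in> snd ` R \<or> vn \<notin> snd ` a_combs X"
    and lpn: "\<And>p v1. p \<in> a_pars X' \<Longrightarrow> lprem p = Some v1 \<Longrightarrow> IV v1 \<notin> set \<pi>n"
    and tcn: "\<And>k v1 v2. (k, v1, v2, vn) \<notin> a_tens X'"
    and rmn: "\<And>p. p \<in> a_pars X' \<Longrightarrow> rmain p \<noteq> Some vn"
  shows "Inv X'"
proof -
  have U: "(\<Union>(\<pi>, v)\<in>a_combs X'. set (varl ev \<pi>)) \<subseteq> (\<Union>(\<pi>, v)\<in>a_combs X. set (varl ev \<pi>))"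
    using C R vars by fastforce
  have Z: "ZZ X \<subseteq> ZZ X'" by (rule ZZ_mono[OF U])
  have A: "\<forall>\<pi> v. (\<pi>, v) \<in> a_combs X' \<longrightarrow> combok X' \<pi> v"
    using C ok combok_mono[OF InvD(3)[OF I] Z] by auto
  have oldnew: "vn \<noteq> v \<and> set (varl ev \<pi>n) \<inter> set (varl ev \<pi>) = {} \<and> set (origs \<pi>n) \<inter> set (origs \<pi>) = {}"
    if o: "(\<pi>, v) \<in> a_combs X - R" for \<pi> v
  proof -
    have "vn \<noteq> v"
    proof
      assume "vn = v"
      then have "vn \<in> snd ` R" using concl o by force
      then obtain \<pi>r where "(\<pi>r, vn) \<in> R" by auto
      then show False using InvD(4)[OF I, of \<pi>r vn \<pi> v] o R \<open>vn = v\<close> by auto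
    qed
    moreover have "set (varl ev \<pi>n) \<inter> set (varl ev \<pi>) = {}"
    proof -
      { fix x assume x: "x \<in> set (varl ev \<pi>n)" "x \<in> set (varl ev \<pi>)"
        then obtain \<pi>r vr where "(\<pi>r, vr) \<in> R" "x \<in> set (varl ev \<pi>r)" using vars by blast
        then have False using InvD(4)[OF I, of \<pi>r vr \<pi> v] o R x by auto }
      then show ?thesis by blast
    qed
    ultimately show ?thesis using orn o by blast
  qed
  have B: "\<forall>\<pi>1 v1 \<pi>2 v2. (\<pi>1, v1) \<in> a_combs X' \<longrightarrow> (\<pi>2, v2) \<in> a_combs X' \<longrightarrow> (\<pi>1, v1) \<noteq> (\<pi>2, v2) \<longrightarrow>
       v1 \<noteq> v2 \<and> set (varl ev \<pi>1) \<inter> set (varl ev \<pi>2) = {} \<and> set (origs \<pi>1) \<inter> set (origs \<pi>2) = {}"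
  proof (intro allI impI)
    fix \<pi>1 v1 \<pi>2 v2
    assume a: "(\<pi>1, v1) \<in> a_combs X'" "(\<pi>2, v2) \<in> a_combs X'" "(\<pi>1, v1) \<noteq> (\<pi>2, v2)"
    show "v1 \<noteq> v2 \<and> set (varl ev \<pi>1) \<inter> set (varl ev \<pi>2) = {} \<and> set (origs \<pi>1) \<inter> set (origs \<pi>2) = {}"
    proof (cases "(\<pi>1, v1) = (\<pi>n, vn)")
      case True
      then have "(\<pi>2, v2) \<in> a_combs X - R" using a C by auto
      then show ?thesis using oldnew True by auto
    next
      case False
      note F1 = False
      show ?thesis
      proof (cases "(\<pi>2, v2) = (\<pi>n, vn)")
        case True
        then have "(\<pi>1, v1) \<in> a_combs X - R" using a C F1 by auto
        then show ?thesis using oldnew True by auto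
      next
        case False
        then have "(\<pi>1, v1) \<in> a_combs X" "(\<pi>2, v2) \<in> a_combs X" using a C F1 by auto
        then show ?thesis using InvD(4)[OF I] a(3) by blast
      qed
    qed
  qed
  have L: "\<forall>p\<in>a_pars X'. \<forall>v1. lprem p = Some v1 \<longrightarrow> (\<forall>\<pi> v. (\<pi>, v) \<in> a_combs X' \<longrightarrow> IV v1 \<notin> set \<pi>)"
  proof (intro ballI allI impI)
    fix p v1 \<pi> v assume p: "p \<in> a_pars X'" "lprem p = Some v1" and c: "(\<pi>, v) \<in> a_combs X'"
    show "IV v1 \<notin> set \<pi>"
    proof (cases "(\<pi>, v) = (\<pi>n, vn)")
      case True then show ?thesis using lpn[OF p] by simp
    next
      case False
      then have "(\<pi>, v) \<in> a_combs X" using c C by auto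
      moreover have "p \<in> a_pars X" using p P by blast
      ultimately show ?thesis using InvD(5)[OF I] p(2) by blast
    qed
  qed
  have TT: "\<forall>k v1 v2 v. (k, v1, v2, v) \<in> a_tens X' \<longrightarrow> v \<notin> snd ` a_combs X'"
  proof (intro allI impI)
    fix k v1 v2 v assume t: "(k, v1, v2, v) \<in> a_tens X'"
    then have "v \<notin> snd ` a_combs X" using T InvD(6)[OF I] by blast
    moreover have "v \<noteq> vn" using tcn t by blast
    ultimately show "v \<notin> snd ` a_combs X'" using C by auto
  qed
  have RM: "\<forall>p\<in>a_pars X'. \<forall>v. rmain p = Some v \<longrightarrow> v \<notin> snd ` a_combs X'"
  proof (intro ballI allI impI)
    fix p v assume p: "p \<in> a_pars X'" "rmain p = Some v"
    then have "v \<notin> snd ` a_combs X" using P InvD(7)[OF I] by blast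
    moreover have "v \<noteq> vn" using rmn p by blast
    ultimately show "v \<notin> snd ` a_combs X'" using C by auto
  qed
  have H: "HV \<subseteq> (\<Union>(\<pi>, v)\<in>a_combs X'. set (varl ev \<pi>))"
  proof
    fix x assume x: "x \<in> HV"
    then obtain \<pi> v where pv: "(\<pi>, v) \<in> a_combs X" "x \<in> set (varl ev \<pi>)" using InvD(8)[OF I] by blast
    show "x \<in> (\<Union>(\<pi>, v)\<in>a_combs X'. set (varl ev \<pi>))"
    proof (cases "(\<pi>, v) \<in> R")
      case True
      then have "x \<in> set (varl ev \<pi>n)" using HVn x pv by blast
      then show ?thesis using C by force
    next
      case False then show ?thesis using C pv by force
    qed
  qed
  have T0: "a_tens X' \<subseteq> a_tens X0" using T InvD(1)[OF I] by blast
  have P0: "a_pars X' \<subseteq> a_pars X0" using P InvD(2)[OF I] by blast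
  show ?thesis unfolding Inv_def using T0 P0 A B L TT RM H by (intro conjI)
qed

end

context PSL
begin

lemma U_lemma:
  assumes "a_combs X' = insert (\<pi>n, vn) (a_combs X - R)" "R \<subseteq> a_combs X"
    "set (varl ev \<pi>n) \<subseteq> (\<Union>(\<pi>, v)\<in>R. set (varl ev \<pi>))"
  shows "ZZ X \<subseteq> ZZ X'"
  using assms by (intro ZZ_mono) fastforce

lemma varl_in_ZZ: "(\<pi>, v) \<in> a_combs X \<Longrightarrow> set (varl ev \<pi>) \<inter> ZZ X = {}"
  unfolding ZZ_def by blast

lemma good_cvars: "good Z f xs \<Longrightarrow> n \<in> set (origs xs) \<Longrightarrow> cvars (fst (f n)) \<inter> set (varl ev xs) = {} \<and> cvars (fst (f n)) \<inter> Z = {}"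
  unfolding good_def by blast

lemma good_ND: "good Z f xs \<Longrightarrow> n \<in> set (origs xs) \<Longrightarrow> ND (fst (f n)) (snd (f n), lab n)"
  unfolding good_def by blast

lemma good_ssort: "good Z f xs \<Longrightarrow> ssort (inst ev f xs) = lsort vs xs"
  unfolding vs_def by (rule ssort_inst) (simp add: good_def)

lemma Mn_plus:
  assumes M1: "Mn Z (a1 @ IV (Orig nw) # a2) v" and M2: "Mn Z b (Orig nw)"
    and d1: "distinct (origs (a1 @ IV (Orig nw) # a2))" and dn: "distinct (origs (a1 @ b @ a2))"
    and vd: "set (varl ev b) \<inter> set (varl ev (a1 @ a2)) = {}"
    and ob: "ovsub b" and o1: "ovsub (a1 @ IV (Orig nw) # a2)"
    and ls: "lsort vs b = vs (Orig nw)"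
    and vz: "set (varl ev b) \<inter> Z = {}"
  shows "Mn Z (a1 @ b @ a2) v"
  unfolding Mn_def
proof (intro allI impI)
  fix f assume g: "good Z f (a1 @ b @ a2)"
  have gb: "good Z f b" by (rule good_mono[OF g]) auto
  have Db: "ND (Hc b + Sc f b) (inst ev f b, lab nw)" using M2 gb unfolding Mn_def by auto
  define g' where "g' = f(nw := (Hc b + Sc f b, inst ev f b))"
  have nw: "nw \<notin> set (origs a1)" "nw \<notin> set (origs a2)" using d1 by auto
  have ssb: "ssort (inst ev f b) = fsort (lab nw)" using good_ssort[OF gb] ls by (simp add: vs_def)
  have hcb: "cvars (Hc b) \<subseteq> set (varl ev b)" by (rule Hc_cvars[OF ob])
  have cSc: "cvars (Sc f b) = (\<Union>m\<in>set (origs b). cvars (fst (f m)))" by (rule cvars_Sc)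
  have gg: "good Z g' (a1 @ IV (Orig nw) # a2)"
    unfolding good_def
  proof (intro conjI ballI impI)
    fix n assume n: "n \<in> set (origs (a1 @ IV (Orig nw) # a2))"
    show "ND (fst (g' n)) (snd (g' n), lab n)"
      using n Db good_ND[OF g] unfolding g'_def by auto
    show "ssort (snd (g' n)) = fsort (lab n)"
      using n ssb g unfolding g'_def good_def by auto
    show "cvars (fst (g' n)) \<inter> (set (varl ev (a1 @ IV (Orig nw) # a2)) \<union> Z) = {}"
    proof (cases "n = nw")
      case True
      have "cvars (Sc f b) \<inter> (set (varl ev (a1 @ b @ a2)) \<union> Z) = {}"
        using cSc good_cvars[OF g] by auto
      then show ?thesis using True hcb vd vz unfolding g'_def by auto
    next
      case False
      then show ?thesis using n good_cvars[OF g, of n] unfolding g'_def by auto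
    qed
  next
    fix n1 n2 assume n: "n1 \<in> set (origs (a1 @ IV (Orig nw) # a2))" "n2 \<in> set (origs (a1 @ IV (Orig nw) # a2))"
      "n1 \<noteq> n2"
    have key: "cvars (Hc b + Sc f b) \<inter> cvars (fst (f m)) = {}" if m: "m \<in> set (origs a1) \<or> m \<in> set (origs a2)" for m
    proof -
      have "cvars (fst (f m)) \<inter> set (varl ev (a1 @ b @ a2)) = {}" using good_cvars[OF g, of m] m by auto
      then have 1: "cvars (Hc b) \<inter> cvars (fst (f m)) = {}" using hcb by auto
      have "cvars (fst (f m')) \<inter> cvars (fst (f m)) = {}" if "m' \<in> set (origs b)" for m'
      proof -
        have "m' \<noteq> m" using dn m that by auto
        then show ?thesis using good_pair[OF g, of m' m] m that by auto
      qed
      then show ?thesis using 1 cSc by auto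
    qed
    show "cvars (fst (g' n1)) \<inter> cvars (fst (g' n2)) = {}"
    proof (cases "n1 = nw")
      case True
      then have "n2 \<in> set (origs a1) \<or> n2 \<in> set (origs a2)" using n by auto
      then show ?thesis using key True n(3) unfolding g'_def by auto
    next
      case False
      note F = False
      show ?thesis
      proof (cases "n2 = nw")
        case True
        then have "n1 \<in> set (origs a1) \<or> n1 \<in> set (origs a2)" using n by auto
        then show ?thesis using key True F unfolding g'_def by auto
      next
        case False
        then show ?thesis using F n good_pair[OF g, of n1 n2] unfolding g'_def by auto
      qed
    qed
  qed
  have D1: "ND (Hc (a1 @ IV (Orig nw) # a2) + Sc g' (a1 @ IV (Orig nw) # a2)) (inst ev g' (a1 @ IV (Orig nw) # a2), labv v)"
    using M1 gg unfolding Mn_def by blast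
  have i1: "inst ev g' a1 = inst ev f a1" "inst ev g' a2 = inst ev f a2"
    using nw by (auto intro!: inst_cong simp: g'_def)
  have s1: "Sc g' a1 = Sc f a1" "Sc g' a2 = Sc f a2"
    using nw by (auto intro!: Sc_cong simp: g'_def)
  have hs: "Hc (a1 @ b @ a2) = Hc (a1 @ IV (Orig nw) # a2) + Hc b"
    by (rule Hc_split) (use vd ob o1 in auto)
  have "inst ev g' (a1 @ IV (Orig nw) # a2) = inst ev f (a1 @ b @ a2)" using i1 by (simp add: g'_def)
  moreover have "Hc (a1 @ IV (Orig nw) # a2) + Sc g' (a1 @ IV (Orig nw) # a2) = Hc (a1 @ b @ a2) + Sc f (a1 @ b @ a2)"
    using s1 hs by (simp add: g'_def Sc_def ac_simps)
  ultimately show "ND (Hc (a1 @ b @ a2) + Sc f (a1 @ b @ a2)) (inst ev f (a1 @ b @ a2), labv v)"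
    using D1 by simp
qed


lemma step_plus:
  assumes I: "Inv X" and c1: "(a1 @ [IV w] @ a2, v) \<in> a_combs X" and c2: "(b, w) \<in> a_combs X" and wv: "w \<noteq> v"
  shows "Inv (X\<lparr>a_combs := insert (a1 @ b @ a2, v) (a_combs X - {(a1 @ [IV w] @ a2, v), (b, w)})\<rparr>)"
    (is "Inv ?X'")
proof -
  let ?p = "a1 @ IV w # a2"
  let ?R = "{(?p, v), (b, w)}"
  have c1': "(?p, v) \<in> a_combs X" using c1 by simp
  have ne: "(?p, v) \<noteq> (b, w)" using wv by auto
  have pw: "set (varl ev ?p) \<inter> set (varl ev b) = {}" "set (origs ?p) \<inter> set (origs b) = {}"
    using InvD(4)[OF I c1' c2 ne] by auto
  have k1: "combok X ?p v" and k2: "combok X b w" using InvD(3)[OF I] c1' c2 by auto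
  obtain nw where nw: "w = Orig nw" using combokD(1)[OF k2] by blast
  have C: "a_combs ?X' = insert (a1 @ b @ a2, v) (a_combs X - ?R)" by simp
  have vars: "set (varl ev (a1 @ b @ a2)) \<subseteq> (\<Union>(\<pi>, v)\<in>?R. set (varl ev \<pi>))" by auto
  have Z: "ZZ X \<subseteq> ZZ ?X'" by (rule U_lemma[OF C _ vars]) (use c1' c2 in auto)
  have inX': "(a1 @ b @ a2, v) \<in> a_combs ?X'" by simp
  have dv: "distinct (varl ev (a1 @ b @ a2))"
    using combokD(2)[OF k1] combokD(2)[OF k2] pw(1) by auto
  have do: "distinct (origs (a1 @ b @ a2))"
    using combokD(3)[OF k1] combokD(3)[OF k2] pw(2) by auto
  have ok: "combok ?X' (a1 @ b @ a2) v"
  proof (rule combokI)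
    show "\<exists>n. v = Orig n" using combokD(1)[OF k1] .
    show "distinct (varl ev (a1 @ b @ a2))" by (rule dv)
    show "distinct (origs (a1 @ b @ a2))" by (rule do)
    show "lsort vs (a1 @ b @ a2) = vs v" using combokD(4)[OF k1] combokD(4)[OF k2] by simp
    show "\<And>p. ISym (SVar p) \<in> set (a1 @ b @ a2) \<Longrightarrow> p \<in> HV"
      using combokD(5)[OF k1] combokD(5)[OF k2] by auto
    show "ovsub (a1 @ b @ a2)"
      by (rule ovsub_split[OF _ combokD(6)[OF k1] combokD(6)[OF k2]]) (use nw in auto)
    show "Mn (ZZ ?X') (a1 @ b @ a2) v"
    proof (rule Mn_plus)
      show "Mn (ZZ ?X') (a1 @ IV (Orig nw) # a2) v" using Mn_mono[OF combokD(7)[OF k1] Z] nw by simp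
      show "Mn (ZZ ?X') b (Orig nw)" using Mn_mono[OF combokD(7)[OF k2] Z] nw by simp
      show "distinct (origs (a1 @ IV (Orig nw) # a2))" using combokD(3)[OF k1] nw by simp
      show "distinct (origs (a1 @ b @ a2))" by (rule do)
      show "set (varl ev b) \<inter> set (varl ev (a1 @ a2)) = {}" using pw(1) by auto
      show "ovsub b" using combokD(6)[OF k2] .
      show "ovsub (a1 @ IV (Orig nw) # a2)" using combokD(6)[OF k1] nw by simp
      show "lsort vs b = vs (Orig nw)" using combokD(4)[OF k2] nw by simp
      show "set (varl ev b) \<inter> ZZ ?X' = {}" using varl_in_ZZ[OF inX'] by auto
    qed
  qed
  show ?thesis
  proof (rule step_frame[OF I C])
    show "?R \<subseteq> a_combs X" using c1' c2 by auto
    show "combok ?X' (a1 @ b @ a2) v" by (rule ok)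
    show "set (varl ev (a1 @ b @ a2)) \<subseteq> (\<Union>(\<pi>, v)\<in>?R. set (varl ev \<pi>))" by (rule vars)
    show "HV \<inter> (\<Union>(\<pi>, v)\<in>?R. set (varl ev \<pi>)) \<subseteq> set (varl ev (a1 @ b @ a2))" using nw by auto
    show "set (origs (a1 @ b @ a2)) \<inter> set (origs \<pi>) = {}" if "(\<pi>, v') \<in> a_combs X - ?R" for \<pi> v'
    proof -
      have "set (origs ?p) \<inter> set (origs \<pi>) = {}" "set (origs b) \<inter> set (origs \<pi>) = {}"
        using InvD(4)[OF I c1', of \<pi> v'] InvD(4)[OF I c2, of \<pi> v'] that by auto
      then show ?thesis by auto
    qed
    show "v \<in> snd ` ?R \<or> v \<notin> snd ` a_combs X" by auto
    show "IV v1 \<notin> set (a1 @ b @ a2)" if "p \<in> a_pars ?X'" "lprem p = Some v1" for p v1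
    proof -
      have "p \<in> a_pars X" using that by simp
      then have "IV v1 \<notin> set ?p" "IV v1 \<notin> set b" using InvD(5)[OF I, of p v1] that(2) c1' c2 by blast+
      then show ?thesis by auto
    qed
    show "(k, v1, v2, v) \<notin> a_tens ?X'" for k v1 v2
      using InvD(6)[OF I, of k v1 v2 v] c1' by force
    show "rmain p \<noteq> Some v" if "p \<in> a_pars ?X'" for p
      using InvD(7)[OF I, of p v] that c1' by force
  qed auto
qed

end

lemma sel_ok_selc: "sel_ok vs k a1 a2 = selc k (lsort vs a1) (lsort vs a2)"
  by (simp add: sel_ok_def selc_def split: wk.splits)

context PSL
begin

lemma good_ssort_sub: "good Z f xs \<Longrightarrow> set (origs ys) \<subseteq> set (origs xs) \<Longrightarrow> ssort (inst ev f ys) = lsort vs ys"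
  unfolding vs_def by (rule ssort_inst) (auto simp: good_def)

lemma Mn_times:
  assumes M1: "Mn Z (a1 @ ISym Sep # a2) (Orig a)" and M2: "Mn Z b (Orig bb)"
    and rel: "lab a = DUp k (lab cc) (lab bb) \<or> lab bb = DDown k (lab a) (lab cc) \<or> lab cc = DWrap k (lab a) (lab bb)"
    and sel: "sel_ok vs k a1 a2"
    and vd: "set (varl ev (a1 @ a2)) \<inter> set (varl ev b) = {}"
    and od: "set (origs (a1 @ a2)) \<inter> set (origs b) = {}"
    and o1: "ovsub (a1 @ ISym Sep # a2)" and ob: "ovsub b"
  shows "Mn Z (a1 @ b @ a2) (Orig cc)"
  unfolding Mn_def
proof (intro allI impI)
  fix f assume g: "good Z f (a1 @ b @ a2)"
  have g1: "good Z f (a1 @ ISym Sep # a2)" by (rule good_mono[OF g]) auto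
  have g2: "good Z f b" by (rule good_mono[OF g]) auto
  have D1: "ND (Hc (a1 @ ISym Sep # a2) + Sc f (a1 @ ISym Sep # a2)) (inst ev f a1 @ Sep # inst ev f a2, lab a)"
    using M1 g1 unfolding Mn_def by auto
  have D2: "ND (Hc b + Sc f b) (inst ev f b, lab bb)" using M2 g2 unfolding Mn_def by auto
  have sc: "selc k (ssort (inst ev f a1)) (ssort (inst ev f a2))"
  proof -
    have "ssort (inst ev f a1) = lsort vs a1" "ssort (inst ev f a2) = lsort vs a2"
      by (rule good_ssort_sub[OF g]; auto)+
    then show ?thesis using sel by (simp add: sel_ok_selc)
  qed
  have h1: "cvars (Hc (a1 @ ISym Sep # a2)) \<subseteq> set (varl ev (a1 @ a2))" using Hc_cvars[OF o1] by simp
  have h2: "cvars (Hc b) \<subseteq> set (varl ev b)" using Hc_cvars[OF ob] by simp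
  have s1: "cvars (Sc f (a1 @ ISym Sep # a2)) \<inter> set (varl ev (a1 @ b @ a2)) = {}"
    using good_cvars[OF g] by (auto simp: cvars_Sc)
  have s2: "cvars (Sc f b) \<inter> set (varl ev (a1 @ b @ a2)) = {}"
    using good_cvars[OF g] by (auto simp: cvars_Sc)
  have s12: "cvars (Sc f (a1 @ ISym Sep # a2)) \<inter> cvars (Sc f b) = {}"
  proof -
    have "cvars (fst (f m1)) \<inter> cvars (fst (f m2)) = {}" if "m1 \<in> set (origs (a1 @ a2))" "m2 \<in> set (origs b)" for m1 m2
      using good_pair[OF g, of m1 m2] that od by auto
    then show ?thesis by (auto simp: cvars_Sc)
  qed
  have dj: "cvars (Hc (a1 @ ISym Sep # a2) + Sc f (a1 @ ISym Sep # a2)) \<inter> cvars (Hc b + Sc f b) = {}"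
    using h1 h2 s1 s2 s12 vd by auto
  have sw: "swrap k (inst ev f a1 @ Sep # inst ev f a2) (inst ev f b) = inst ev f a1 @ inst ev f b @ inst ev f a2"
    "wrap_defined k (inst ev f a1 @ Sep # inst ev f a2)"
    using swrap_split[OF sc] by auto
  have D: "ND (Hc (a1 @ ISym Sep # a2) + Sc f (a1 @ ISym Sep # a2) + (Hc b + Sc f b)) (inst ev f (a1 @ b @ a2), lab cc)"
    using rel
  proof (elim disjE)
    assume r: "lab a = DUp k (lab cc) (lab bb)"
    show ?thesis using ND.upE[OF D1[unfolded r] D2 sw(2) dj] sw(1) by simp
  next
    assume r: "lab bb = DDown k (lab a) (lab cc)"
    show ?thesis using ND.downE[OF D1 D2[unfolded r] sw(2) dj] sw(1) by simp
  next
    assume r: "lab cc = DWrap k (lab a) (lab bb)"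
    show ?thesis using ND.wrapI[OF D1 D2 sw(2) dj] sw(1) r by simp
  qed
  have hs: "Hc (a1 @ b @ a2) = Hc (a1 @ ISym Sep # a2) + Hc b"
    by (rule Hc_split) (use vd o1 ob in auto)
  show "ND (Hc (a1 @ b @ a2) + Sc f (a1 @ b @ a2)) (inst ev f (a1 @ b @ a2), labv (Orig cc))"
    using D hs by (simp add: ac_simps)
qed


lemma step_times:
  assumes I: "Inv X" and t: "(k, v1, v2, v) \<in> a_tens X"
    and c1: "(a1 @ [ISym Sep] @ a2, v1) \<in> a_combs X" and c2: "(b, v2) \<in> a_combs X"
    and sel: "sel_ok vs k a1 a2" and v12: "v1 \<noteq> v2"
  shows "Inv (X\<lparr>a_tens := a_tens X - {(k, v1, v2, v)},
          a_combs := insert (a1 @ b @ a2, v) (a_combs X - {(a1 @ [ISym Sep] @ a2, v1), (b, v2)})\<rparr>)"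
    (is "Inv ?X'")
proof -
  let ?p = "a1 @ ISym Sep # a2"
  let ?R = "{(?p, v1), (b, v2)}"
  have c1': "(?p, v1) \<in> a_combs X" using c1 by simp
  have ne: "(?p, v1) \<noteq> (b, v2)" using v12 by auto
  have pw: "set (varl ev ?p) \<inter> set (varl ev b) = {}" "set (origs ?p) \<inter> set (origs b) = {}"
    using InvD(4)[OF I c1' c2 ne] by auto
  have k1: "combok X ?p v1" and k2: "combok X b v2" using InvD(3)[OF I] c1' c2 by auto
  have t0: "(k, v1, v2, v) \<in> a_tens X0" using t InvD(1)[OF I] by blast
  obtain r a bb cc where L: "(r, [a, bb], [cc]) \<in> links" "v1 = Orig a" "v2 = Orig bb" "v = Orig cc"
      "r = TLUp k \<and> lab a = DUp k (lab cc) (lab bb) \<or> r = TLDown k \<and> lab bb = DDown k (lab a) (lab cc)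
       \<or> r = TRWrap k \<and> lab cc = DWrap k (lab a) (lab bb)"
    using tens0_cases[OF t0] by metis
  have wf3: "wf (lab a)" "wf (lab bb)" "wf (lab cc)" using link_V[OF L(1)] wfV by auto
  have C: "a_combs ?X' = insert (a1 @ b @ a2, v) (a_combs X - ?R)" by simp
  have vars: "set (varl ev (a1 @ b @ a2)) \<subseteq> (\<Union>(\<pi>, v)\<in>?R. set (varl ev \<pi>))" by auto
  have Z: "ZZ X \<subseteq> ZZ ?X'" by (rule U_lemma[OF C _ vars]) (use c1' c2 in auto)
  have dv: "distinct (varl ev (a1 @ b @ a2))"
    using combokD(2)[OF k1] combokD(2)[OF k2] pw(1) by auto
  have do: "distinct (origs (a1 @ b @ a2))"
    using combokD(3)[OF k1] combokD(3)[OF k2] pw(2) by auto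
  have ls: "lsort vs (a1 @ b @ a2) = vs v"
  proof -
    have e1: "lsort vs a1 + 1 + lsort vs a2 = fsort (lab a)" using combokD(4)[OF k1] L(2) by (simp add: vs_def)
    have e2: "lsort vs b = fsort (lab bb)" using combokD(4)[OF k2] L(3) by (simp add: vs_def)
    show ?thesis using L(4,5) e1 e2 wf3 by (auto simp: vs_def)
  qed
  have ok: "combok ?X' (a1 @ b @ a2) v"
  proof (rule combokI)
    show "\<exists>n. v = Orig n" using L(4) by blast
    show "distinct (varl ev (a1 @ b @ a2))" by (rule dv)
    show "distinct (origs (a1 @ b @ a2))" by (rule do)
    show "lsort vs (a1 @ b @ a2) = vs v" by (rule ls)
    show "\<And>p. ISym (SVar p) \<in> set (a1 @ b @ a2) \<Longrightarrow> p \<in> HV"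
      using combokD(5)[OF k1] combokD(5)[OF k2] by auto
    show "ovsub (a1 @ b @ a2)"
      by (rule ovsub_split[OF _ combokD(6)[OF k1] combokD(6)[OF k2]]) auto
    have "Mn (ZZ ?X') (a1 @ b @ a2) (Orig cc)"
    proof (rule Mn_times)
      show "Mn (ZZ ?X') (a1 @ ISym Sep # a2) (Orig a)" using Mn_mono[OF combokD(7)[OF k1] Z] L(2) by simp
      show "Mn (ZZ ?X') b (Orig bb)" using Mn_mono[OF combokD(7)[OF k2] Z] L(3) by simp
      show "lab a = DUp k (lab cc) (lab bb) \<or> lab bb = DDown k (lab a) (lab cc) \<or> lab cc = DWrap k (lab a) (lab bb)"
        using L(5) by blast
      show "sel_ok vs k a1 a2" by (rule sel)
      show "set (varl ev (a1 @ a2)) \<inter> set (varl ev b) = {}" using pw(1) by auto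
      show "set (origs (a1 @ a2)) \<inter> set (origs b) = {}" using pw(2) by auto
      show "ovsub (a1 @ ISym Sep # a2)" using combokD(6)[OF k1] .
      show "ovsub b" using combokD(6)[OF k2] .
    qed
    then show "Mn (ZZ ?X') (a1 @ b @ a2) v" using L(4) by simp
  qed
  show ?thesis
  proof (rule step_frame[OF I C])
    show "?R \<subseteq> a_combs X" using c1' c2 by auto
    show "combok ?X' (a1 @ b @ a2) v" by (rule ok)
    show "set (varl ev (a1 @ b @ a2)) \<subseteq> (\<Union>(\<pi>, v)\<in>?R. set (varl ev \<pi>))" by (rule vars)
    show "HV \<inter> (\<Union>(\<pi>, v)\<in>?R. set (varl ev \<pi>)) \<subseteq> set (varl ev (a1 @ b @ a2))" by auto
    show "set (origs (a1 @ b @ a2)) \<inter> set (origs \<pi>) = {}" if "(\<pi>, v') \<in> a_combs X - ?R" for \<pi> v'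
    proof -
      have "set (origs ?p) \<inter> set (origs \<pi>) = {}" "set (origs b) \<inter> set (origs \<pi>) = {}"
        using InvD(4)[OF I c1', of \<pi> v'] InvD(4)[OF I c2, of \<pi> v'] that by auto
      then show ?thesis by auto
    qed
    show "v \<in> snd ` ?R \<or> v \<notin> snd ` a_combs X" using InvD(6)[OF I t] by blast
    show "IV w1 \<notin> set (a1 @ b @ a2)" if "p \<in> a_pars ?X'" "lprem p = Some w1" for p w1
    proof -
      have "p \<in> a_pars X" using that by simp
      then have "IV w1 \<notin> set ?p" "IV w1 \<notin> set b" using InvD(5)[OF I, of p w1] that(2) c1' c2 by blast+
      then show ?thesis by auto
    qed
    show "(k', w1, w2, v) \<notin> a_tens ?X'" for k' w1 w2
    proof
      assume "(k', w1, w2, v) \<in> a_tens ?X'"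
      then have "(k', w1, w2, v) \<in> a_tens X0" "(k', w1, w2, v) \<noteq> (k, v1, v2, v)"
        using InvD(1)[OF I] by auto
      then show False using tens_concl_unique[OF _ t0] by auto
    qed
    show "rmain p \<noteq> Some v" if "p \<in> a_pars ?X'" for p
      using tens_rmain[OF t0, of p] that InvD(2)[OF I] by auto
  qed auto
qed

end

lemma origs_mem: "n \<in> set (origs xs) \<longleftrightarrow> IV (Orig n) \<in> set xs"
proof (induction xs)
  case (Cons a xs) then show ?case by (cases a rule: origi.cases) auto
qed simp

context PSL
begin

lemma step_rpar:
  assumes I: "Inv X" and p: "p \<in> a_pars X" and rm: "rmain p = Some v"
    and co: "(\<pi>o, vo) \<in> a_combs X"
    and C: "a_combs X' = insert (\<pi>n, v) (a_combs X - {(\<pi>o, vo)})"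
    and T: "a_tens X' = a_tens X" and P: "a_pars X' = a_pars X - {p}"
    and ok: "combok X' \<pi>n v"
    and vars: "set (varl ev \<pi>n) \<subseteq> set (varl ev \<pi>o)"
    and hvn: "HV \<inter> set (varl ev \<pi>o) \<subseteq> set (varl ev \<pi>n)"
    and ivs: "\<And>x. IV x \<in> set \<pi>n \<Longrightarrow> IV x \<in> set \<pi>o"
  shows "Inv X'"
proof (rule step_frame[OF I C])
  show "{(\<pi>o, vo)} \<subseteq> a_combs X" using co by auto
  show "a_tens X' \<subseteq> a_tens X" "a_pars X' \<subseteq> a_pars X" using T P by auto
  show "combok X' \<pi>n v" by (rule ok)
  show "set (varl ev \<pi>n) \<subseteq> (\<Union>(\<pi>, v)\<in>{(\<pi>o, vo)}. set (varl ev \<pi>))" using vars by auto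
  show "HV \<inter> (\<Union>(\<pi>, v)\<in>{(\<pi>o, vo)}. set (varl ev \<pi>)) \<subseteq> set (varl ev \<pi>n)" using hvn by auto
  show "set (origs \<pi>n) \<inter> set (origs \<pi>) = {}" if "(\<pi>, v') \<in> a_combs X - {(\<pi>o, vo)}" for \<pi> v'
  proof -
    have "set (origs \<pi>n) \<subseteq> set (origs \<pi>o)" using ivs by (auto simp: origs_mem)
    then show ?thesis using InvD(4)[OF I co, of \<pi> v'] that by auto
  qed
  show "v \<in> snd ` {(\<pi>o, vo)} \<or> v \<notin> snd ` a_combs X" using InvD(7)[OF I p rm] by blast
  show "IV w \<notin> set \<pi>n" if "q \<in> a_pars X'" "lprem q = Some w" for q w
    using InvD(5)[OF I, of q w \<pi>o vo] that co P ivs by blast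
  show "(k, w1, w2, v) \<notin> a_tens X'" for k w1 w2
    using tens_rmain[of k w1 w2 v p] InvD(1,2)[OF I] T p rm by blast
  show "rmain q \<noteq> Some v" if "q \<in> a_pars X'" for q
    using rmain_unique[of q p v] InvD(2)[OF I] that P p rm by blast
qed

lemma step_lpar:
  assumes I: "Inv X" and p: "p \<in> a_pars X" and lp: "lprem p = Some (Orig cc)"
    and co: "(\<pi>o, vo) \<in> a_combs X"
    and C: "a_combs X' = insert (\<pi>n, vo) (a_combs X - {(\<pi>o, vo)})"
    and T: "a_tens X' = a_tens X" and P: "a_pars X' = a_pars X - {p}"
    and ok: "combok X' \<pi>n vo"
    and vars: "set (varl ev \<pi>n) \<subseteq> set (varl ev \<pi>o)"
    and hvn: "HV \<inter> set (varl ev \<pi>o) \<subseteq> set (varl ev \<pi>n)"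
    and ivs: "\<And>x. IV x \<in> set \<pi>n \<Longrightarrow> IV x \<in> set \<pi>o \<or> x = Orig cc"
  shows "Inv X'"
proof (rule step_frame[OF I C])
  show "{(\<pi>o, vo)} \<subseteq> a_combs X" using co by auto
  show "a_tens X' \<subseteq> a_tens X" "a_pars X' \<subseteq> a_pars X" using T P by auto
  show "combok X' \<pi>n vo" by (rule ok)
  show "set (varl ev \<pi>n) \<subseteq> (\<Union>(\<pi>, v)\<in>{(\<pi>o, vo)}. set (varl ev \<pi>))" using vars by auto
  show "HV \<inter> (\<Union>(\<pi>, v)\<in>{(\<pi>o, vo)}. set (varl ev \<pi>)) \<subseteq> set (varl ev \<pi>n)" using hvn by auto
  show "set (origs \<pi>n) \<inter> set (origs \<pi>) = {}" if o: "(\<pi>, v') \<in> a_combs X - {(\<pi>o, vo)}" for \<pi> v'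
  proof -
    have "set (origs \<pi>n) \<subseteq> set (origs \<pi>o) \<union> {cc}" using ivs by (auto simp: origs_mem) (metis avtx.inject(1))
    moreover have "cc \<notin> set (origs \<pi>)" using InvD(5)[OF I p lp, of \<pi> v'] o by (auto simp: origs_mem)
    ultimately show ?thesis using InvD(4)[OF I co, of \<pi> v'] o by auto
  qed
  show "vo \<in> snd ` {(\<pi>o, vo)} \<or> vo \<notin> snd ` a_combs X" by auto
  show "IV w \<notin> set \<pi>n" if q: "q \<in> a_pars X'" "lprem q = Some w" for q w
  proof
    assume w: "IV w \<in> set \<pi>n"
    have qX: "q \<in> a_pars X" "q \<noteq> p" using q P by auto
    from ivs[OF w] show False
    proof
      assume "IV w \<in> set \<pi>o" then show False using InvD(5)[OF I qX(1) q(2) co] by blast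
    next
      assume "w = Orig cc"
      then show False using lprem_unique[of q p w] InvD(2)[OF I] qX p lp q(2) by auto
    qed
  qed
  show "(k, w1, w2, vo) \<notin> a_tens X'" for k w1 w2
    using InvD(6)[OF I, of k w1 w2 vo] co T by force
  show "rmain q \<noteq> Some vo" if "q \<in> a_pars X'" for q
    using InvD(7)[OF I, of q vo] co P that by force
qed

lemma Hc_eA:
  assumes "u \<in> AUXV" "ovsub ys" "set (varl ev xs) = set (svars (fst (aj u))) \<union> set (varl ev ys)"
    "set (svars (fst (aj u))) \<inter> set (varl ev ys) = {}"
  shows "Hc xs = add_mset (aj u) (Hc ys)"
proof -
  obtain zs :: "item list" where z: "set (varl ev zs) = set (svars (fst (aj u)))"
    by (rule that[of "expn u (fsort (lab u))"]) (simp add: expn_facts svars_aj del: upt_Suc)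
  have "Hc xs = Hc zs + Hc ys"
    by (rule Hc_split) (use assms z ovsub_eA[OF assms(1) z] in auto)
  then show ?thesis using ovsub_eA[OF assms(1) z] by simp
qed

lemma ovsub_remove:
  assumes "u \<in> AUXV" "ovsub xs" "set (varl ev xs) = set (svars (fst (aj u))) \<union> set (varl ev ys)"
    "set (svars (fst (aj u))) \<inter> set (varl ev ys) = {}"
  shows "ovsub ys"
  unfolding ovsub_def
proof (intro ballI impI)
  fix j assume j: "j \<in> Jall" "ovl j ys"
  then have o: "ovl j xs" using assms(3) by (auto simp: ovl_def)
  have "j \<noteq> aj u" using j assms(4) by (auto simp: ovl_def)
  then have "set (svars (fst j)) \<inter> set (svars (fst (aj u))) = {}" using Jall_disj[OF j(1) aj_in[OF assms(1)]] by auto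
  then show "set (svars (fst j)) \<subseteq> set (varl ev ys)" using assms(2,3) j(1) o by (auto simp: ovsub_def)
qed

end

context PSL
begin

lemma Sc_noorig: "origs xs = [] \<Longrightarrow> Sc f xs = {#}"
  by (simp add: Sc_def)

lemma varl_eA: "set (varl ev (expn a (fsort (lab a)))) = set (svars (fst (aj a)))"
  by (simp add: expn_facts svars_aj del: upt_Suc)

lemma inst_eA: "inst ev f (expn a (fsort (lab a))) = fst (aj a)"
  by (simp add: expn_facts aj_def del: upt_Suc)

lemma aj_split: "aj a = (fst (aj a), lab a)" by (simp add: aj_def)

lemma ZZ_in: "x \<in> EVR \<Longrightarrow> (\<And>\<pi> v. (\<pi>, v) \<in> a_combs X \<Longrightarrow> x \<notin> set (varl ev \<pi>)) \<Longrightarrow> x \<in> ZZ X"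
  unfolding ZZ_def by blast

lemma aj_EVR: "set (svars (fst (aj a))) \<subseteq> EVR"
  by (auto simp: svars_aj simp del: upt_Suc)

lemma HV_aj: "HV \<inter> set (svars (fst (aj a))) = {}"
  using aj_EVR HV_EVR by blast

lemma Mn_under:
  assumes M: "Mn Z (eA @ b) (Orig cc)" and eA: "eA = expn a (fsort (lab a))" and aA: "a \<in> AUXV"
    and lm: "lab m = DUnder (lab a) (lab cc)" and wfm: "wf (lab m)"
    and dv: "distinct (varl ev (eA @ b))" and ov: "ovsub (eA @ b)"
    and ez: "set (svars (fst (aj a))) \<subseteq> Z"
  shows "Mn Z b (Orig m)"
  unfolding Mn_def
proof (intro allI impI)
  fix f assume g: "good Z f b"
  have ve: "set (varl ev eA) = set (svars (fst (aj a)))" using eA varl_eA by simp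
  have oe: "origs eA = []" using eA by (simp add: expn_facts)
  have ge: "good Z f (eA @ b)" by (rule good_mono[OF g]) (use oe ve ez in auto)
  have D: "ND (Hc (eA @ b) + Sc f (eA @ b)) (inst ev f (eA @ b), lab cc)" using M ge unfolding Mn_def by auto
  have dj: "set (svars (fst (aj a))) \<inter> set (varl ev b) = {}" using dv ve by auto
  have vs: "set (varl ev (eA @ b)) = set (svars (fst (aj a))) \<union> set (varl ev b)" using ve by auto
  have ovb: "ovsub b" by (rule ovsub_remove[OF aA ov vs dj])
  have hc: "Hc (eA @ b) = add_mset (aj a) (Hc b)" by (rule Hc_eA[OF aA ovb vs dj])
  have D': "ND (add_mset (fst (aj a), lab a) (Hc b + Sc f b)) (fst (aj a) @ inst ev f b, lab cc)"
    using D hc oe eA inst_eA[of f a] Sc_noorig[OF oe, of f] aj_split[of a] by simp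
  have fr: "set (svars (fst (aj a))) \<inter> cvars (Hc b + Sc f b) = {}"
  proof -
    have "cvars (Sc f b) \<inter> Z = {}" using good_cvars[OF g] by (auto simp: cvars_Sc)
    then show ?thesis using Hc_cvars[OF ovb] dj ez by auto
  qed
  have "ND (Hc b + Sc f b) (inst ev f b, DUnder (lab a) (lab cc))"
    by (rule ND.underI[OF D' _ fr]) (use hyp_label_aj[of a "fsort (lab a)"] wfm lm in \<open>simp_all add: aj_def\<close>)
  then show "ND (Hc b + Sc f b) (inst ev f b, labv (Orig m))" using lm by simp
qed

lemma step_under:
  assumes I: "Inv X" and p: "RUnderL v1 eA v \<in> a_pars X" and c: "(eA @ b, v1) \<in> a_combs X"
  shows "Inv (X\<lparr>a_pars := a_pars X - {RUnderL v1 eA v}, a_combs := insert (b, v) (a_combs X - {(eA @ b, v1)})\<rparr>)"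
    (is "Inv ?X'")
proof -
  have p0: "RUnderL v1 eA v \<in> a_pars X0" using p InvD(2)[OF I] by blast
  obtain cc a m where L: "v1 = Orig cc" "eA = expn a (fsort (lab a))" "v = Orig m"
      "(PRUnder, [cc], [a, m]) \<in> links" "lab m = DUnder (lab a) (lab cc)"
    using p0 by (cases rule: pars0_cases) auto
  have aA: "a \<in> AUXV" using AUXV_I[OF L(4)] by simp
  have wfm: "wf (lab m)" using link_V[OF L(4)] wfV by auto
  have k: "combok X (eA @ b) v1" using InvD(3)[OF I c] .
  have ve: "set (varl ev eA) = set (svars (fst (aj a)))" using L(2) varl_eA by simp
  have oe: "origs eA = []" using L(2) by (simp add: expn_facts)
  have dv: "distinct (varl ev (eA @ b))" using combokD(2)[OF k] .
  have dj: "set (svars (fst (aj a))) \<inter> set (varl ev b) = {}" using dv ve by auto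
  have vs: "set (varl ev (eA @ b)) = set (svars (fst (aj a))) \<union> set (varl ev b)" using ve by auto
  have C: "a_combs ?X' = insert (b, v) (a_combs X - {(eA @ b, v1)})" by simp
  have Z: "ZZ X \<subseteq> ZZ ?X'" by (rule U_lemma[OF C]) (use c in auto)
  have ez: "set (svars (fst (aj a))) \<subseteq> ZZ ?X'"
  proof
    fix x assume x: "x \<in> set (svars (fst (aj a)))"
    show "x \<in> ZZ ?X'"
    proof (rule ZZ_in)
      show "x \<in> EVR" using x aj_EVR by blast
      show "x \<notin> set (varl ev \<pi>)" if "(\<pi>, w) \<in> a_combs ?X'" for \<pi> w
      proof (cases "(\<pi>, w) = (b, v)")
        case True then show ?thesis using x dj by auto
      next
        case False
        then have "(\<pi>, w) \<in> a_combs X" "(\<pi>, w) \<noteq> (eA @ b, v1)" using that by auto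
        then show ?thesis using InvD(4)[OF I c, of \<pi> w] x ve by auto
      qed
    qed
  qed
  have ok: "combok ?X' b v"
  proof (rule combokI)
    show "\<exists>n. v = Orig n" using L(3) by blast
    show "distinct (varl ev b)" using dv by simp
    show "distinct (origs b)" using combokD(3)[OF k] oe by simp
    show "lsort vs b = vs v"
    proof -
      have "lsort vs (eA @ b) = vs v1" using combokD(4)[OF k] .
      then have "fsort (lab a) + lsort vs b = fsort (lab cc)" using L(1,2) by (simp add: vs_def expn_facts)
      then show ?thesis using L(3,5) by (simp add: vs_def)
    qed
    show "\<And>p. ISym (SVar p) \<in> set b \<Longrightarrow> p \<in> HV" using combokD(5)[OF k] by auto
    show "ovsub b" by (rule ovsub_remove[OF aA combokD(6)[OF k] vs dj])
    have M': "Mn (ZZ ?X') (eA @ b) (Orig cc)" using Mn_mono[OF combokD(7)[OF k] Z] L(1) by simp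
    show "Mn (ZZ ?X') b v"
      using Mn_under[OF M' L(2) aA L(5) wfm dv combokD(6)[OF k] ez] L(3) by simp
  qed
  show ?thesis
  proof (rule step_rpar[OF I p _ c C _ _ ok])
    show "rmain (RUnderL v1 eA v) = Some v" by simp
    show "set (varl ev b) \<subseteq> set (varl ev (eA @ b))" by auto
    show "HV \<inter> set (varl ev (eA @ b)) \<subseteq> set (varl ev b)" using vs HV_aj[of a] by auto
    show "IV x \<in> set (eA @ b)" if "IV x \<in> set b" for x using that by auto
  qed auto
qed


lemma Mn_over:
  assumes M: "Mn Z (b @ eB) (Orig cc)" and eB: "eB = expn bb (fsort (lab bb))" and aA: "bb \<in> AUXV"
    and lm: "lab m = DOver (lab cc) (lab bb)" and wfm: "wf (lab m)"
    and dv: "distinct (varl ev (b @ eB))" and ov: "ovsub (b @ eB)"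
    and ez: "set (svars (fst (aj bb))) \<subseteq> Z"
  shows "Mn Z b (Orig m)"
  unfolding Mn_def
proof (intro allI impI)
  fix f assume g: "good Z f b"
  have ve: "set (varl ev eB) = set (svars (fst (aj bb)))" using eB varl_eA by simp
  have oe: "origs eB = []" using eB by (simp add: expn_facts)
  have ge: "good Z f (b @ eB)" by (rule good_mono[OF g]) (use oe ve ez in auto)
  have D: "ND (Hc (b @ eB) + Sc f (b @ eB)) (inst ev f (b @ eB), lab cc)" using M ge unfolding Mn_def by auto
  have dj: "set (svars (fst (aj bb))) \<inter> set (varl ev b) = {}" using dv ve by auto
  have vs: "set (varl ev (b @ eB)) = set (svars (fst (aj bb))) \<union> set (varl ev b)" using ve by auto
  have ovb: "ovsub b" by (rule ovsub_remove[OF aA ov vs dj])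
  have hc: "Hc (b @ eB) = add_mset (aj bb) (Hc b)" by (rule Hc_eA[OF aA ovb vs dj])
  have D': "ND (add_mset (fst (aj bb), lab bb) (Hc b + Sc f b)) (inst ev f b @ fst (aj bb), lab cc)"
    using D hc oe eB inst_eA[of f bb] Sc_noorig[OF oe, of f] aj_split[of bb] by simp
  have fr: "set (svars (fst (aj bb))) \<inter> cvars (Hc b + Sc f b) = {}"
  proof -
    have "cvars (Sc f b) \<inter> Z = {}" using good_cvars[OF g] by (auto simp: cvars_Sc)
    then show ?thesis using Hc_cvars[OF ovb] dj ez by auto
  qed
  have "ND (Hc b + Sc f b) (inst ev f b, DOver (lab cc) (lab bb))"
    by (rule ND.overI[OF D' _ fr]) (use hyp_label_aj[of bb "fsort (lab bb)"] wfm lm in \<open>simp_all add: aj_def\<close>)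
  then show "ND (Hc b + Sc f b) (inst ev f b, labv (Orig m))" using lm by simp
qed

lemma ez_lemma:
  assumes I: "Inv X" and c: "(\<pi>o, v1) \<in> a_combs X" and ve: "set (svars (fst (aj a))) \<subseteq> set (varl ev \<pi>o)"
    and dj: "set (svars (fst (aj a))) \<inter> set (varl ev \<pi>n) = {}"
    and C: "a_combs X' = insert (\<pi>n, v) (a_combs X - {(\<pi>o, v1)})"
  shows "set (svars (fst (aj a))) \<subseteq> ZZ X'"
proof
  fix x assume x: "x \<in> set (svars (fst (aj a)))"
  show "x \<in> ZZ X'"
  proof (rule ZZ_in)
    show "x \<in> EVR" using x aj_EVR by blast
    show "x \<notin> set (varl ev \<pi>)" if "(\<pi>, w) \<in> a_combs X'" for \<pi> w
    proof (cases "(\<pi>, w) = (\<pi>n, v)")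
      case True then show ?thesis using x dj by auto
    next
      case False
      then have "(\<pi>, w) \<in> a_combs X" "(\<pi>, w) \<noteq> (\<pi>o, v1)" using that C by auto
      then show ?thesis using InvD(4)[OF I c, of \<pi> w] x ve by auto
    qed
  qed
qed

lemma step_over:
  assumes I: "Inv X" and p: "ROverL v1 v eB \<in> a_pars X" and c: "(b @ eB, v1) \<in> a_combs X"
  shows "Inv (X\<lparr>a_pars := a_pars X - {ROverL v1 v eB}, a_combs := insert (b, v) (a_combs X - {(b @ eB, v1)})\<rparr>)"
    (is "Inv ?X'")
proof -
  have p0: "ROverL v1 v eB \<in> a_pars X0" using p InvD(2)[OF I] by blast
  obtain cc bb m where L: "v1 = Orig cc" "eB = expn bb (fsort (lab bb))" "v = Orig m"
      "(PROver, [cc], [m, bb]) \<in> links" "lab m = DOver (lab cc) (lab bb)"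
    using p0 by (cases rule: pars0_cases) auto
  have aA: "bb \<in> AUXV" using AUXV_I[OF L(4)] by simp
  have wfm: "wf (lab m)" using link_V[OF L(4)] wfV by auto
  have k: "combok X (b @ eB) v1" using InvD(3)[OF I c] .
  have ve: "set (varl ev eB) = set (svars (fst (aj bb)))" using L(2) varl_eA by simp
  have oe: "origs eB = []" using L(2) by (simp add: expn_facts)
  have dv: "distinct (varl ev (b @ eB))" using combokD(2)[OF k] .
  have dj: "set (svars (fst (aj bb))) \<inter> set (varl ev b) = {}" using dv ve by auto
  have vs: "set (varl ev (b @ eB)) = set (svars (fst (aj bb))) \<union> set (varl ev b)" using ve by auto
  have C: "a_combs ?X' = insert (b, v) (a_combs X - {(b @ eB, v1)})" by simp
  have Z: "ZZ X \<subseteq> ZZ ?X'" by (rule U_lemma[OF C]) (use c in auto)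
  have ez: "set (svars (fst (aj bb))) \<subseteq> ZZ ?X'" by (rule ez_lemma[OF I c _ dj C]) (use vs in auto)
  have ok: "combok ?X' b v"
  proof (rule combokI)
    show "\<exists>n. v = Orig n" using L(3) by blast
    show "distinct (varl ev b)" using dv by simp
    show "distinct (origs b)" using combokD(3)[OF k] oe by simp
    show "lsort vs b = vs v"
    proof -
      have "lsort vs (b @ eB) = vs v1" using combokD(4)[OF k] .
      then have "lsort vs b + fsort (lab bb) = fsort (lab cc)" using L(1,2) by (simp add: vs_def expn_facts)
      then show ?thesis using L(3,5) by (simp add: vs_def)
    qed
    show "\<And>p. ISym (SVar p) \<in> set b \<Longrightarrow> p \<in> HV" using combokD(5)[OF k] by auto
    show "ovsub b" by (rule ovsub_remove[OF aA combokD(6)[OF k] vs dj])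
    have M': "Mn (ZZ ?X') (b @ eB) (Orig cc)" using Mn_mono[OF combokD(7)[OF k] Z] L(1) by simp
    show "Mn (ZZ ?X') b v"
      using Mn_over[OF M' L(2) aA L(5) wfm dv combokD(6)[OF k] ez] L(3) by simp
  qed
  show ?thesis
  proof (rule step_rpar[OF I p _ c C _ _ ok])
    show "rmain (ROverL v1 v eB) = Some v" by simp
    show "set (varl ev b) \<subseteq> set (varl ev (b @ eB))" by auto
    show "HV \<inter> set (varl ev (b @ eB)) \<subseteq> set (varl ev b)" using vs HV_aj[of bb] by auto
    show "IV x \<in> set (b @ eB)" if "IV x \<in> set b" for x using that by auto
  qed auto
qed

lemma Mn_up:
  assumes M: "Mn Z (a1 @ eB @ a2) (Orig cc)" and eB: "eB = expn bb (fsort (lab bb))" and aA: "bb \<in> AUXV"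
    and lm: "lab m = DUp k (lab cc) (lab bb)" and wfm: "wf (lab m)" and sel: "sel_ok vs k a1 a2"
    and dv: "distinct (varl ev (a1 @ eB @ a2))" and ov: "ovsub (a1 @ eB @ a2)"
    and ez: "set (svars (fst (aj bb))) \<subseteq> Z"
  shows "Mn Z (a1 @ ISym Sep # a2) (Orig m)"
  unfolding Mn_def
proof (intro allI impI)
  let ?n = "a1 @ ISym Sep # a2"
  fix f assume g: "good Z f ?n"
  have ve: "set (varl ev eB) = set (svars (fst (aj bb)))" using eB varl_eA by simp
  have oe: "origs eB = []" using eB by (simp add: expn_facts)
  have ge: "good Z f (a1 @ eB @ a2)" by (rule good_mono[OF g]) (use oe ve ez in auto)
  have D: "ND (Hc (a1 @ eB @ a2) + Sc f (a1 @ eB @ a2)) (inst ev f (a1 @ eB @ a2), lab cc)"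
    using M ge unfolding Mn_def by auto
  have dj: "set (svars (fst (aj bb))) \<inter> set (varl ev ?n) = {}" using dv ve by auto
  have vs: "set (varl ev (a1 @ eB @ a2)) = set (svars (fst (aj bb))) \<union> set (varl ev ?n)" using ve by auto
  have ovb: "ovsub ?n" by (rule ovsub_remove[OF aA ov vs dj])
  have hc: "Hc (a1 @ eB @ a2) = add_mset (aj bb) (Hc ?n)" by (rule Hc_eA[OF aA ovb vs dj])
  have sc: "selc k (ssort (inst ev f a1)) (ssort (inst ev f a2))"
  proof -
    have "ssort (inst ev f a1) = lsort vs a1" "ssort (inst ev f a2) = lsort vs a2"
      by (rule good_ssort_sub[OF g]; auto)+
    then show ?thesis using sel by (simp add: sel_ok_selc)
  qed
  have sw: "swrap k (inst ev f ?n) (fst (aj bb)) = inst ev f a1 @ fst (aj bb) @ inst ev f a2"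
    "wrap_defined k (inst ev f ?n)" using swrap_split[OF sc] by auto
  have D': "ND (add_mset (fst (aj bb), lab bb) (Hc ?n + Sc f ?n)) (swrap k (inst ev f ?n) (fst (aj bb)), lab cc)"
    using D hc oe eB inst_eA[of f bb] Sc_noorig[OF oe, of f] aj_split[of bb] sw(1) by simp
  have fr: "set (svars (fst (aj bb))) \<inter> cvars (Hc ?n + Sc f ?n) = {}"
  proof -
    have "cvars (Sc f ?n) \<inter> Z = {}" using good_cvars[OF g] by (auto simp: cvars_Sc)
    then show ?thesis using Hc_cvars[OF ovb] dj ez by auto
  qed
  have "ND (Hc ?n + Sc f ?n) (inst ev f ?n, DUp k (lab cc) (lab bb))"
    by (rule ND.upI[OF D' sw(2) _ fr]) (use hyp_label_aj[of bb "fsort (lab bb)"] wfm lm in \<open>simp_all add: aj_def\<close>)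
  then show "ND (Hc ?n + Sc f ?n) (inst ev f ?n, labv (Orig m))" using lm by simp
qed

lemma step_up:
  assumes I: "Inv X" and p: "RUpL k v1 v eB \<in> a_pars X" and c: "(a1 @ eB @ a2, v1) \<in> a_combs X"
    and sel: "sel_ok vs k a1 a2"
  shows "Inv (X\<lparr>a_pars := a_pars X - {RUpL k v1 v eB},
          a_combs := insert (a1 @ ISym Sep # a2, v) (a_combs X - {(a1 @ eB @ a2, v1)})\<rparr>)"
    (is "Inv ?X'")
proof -
  let ?n = "a1 @ ISym Sep # a2"
  let ?o = "a1 @ eB @ a2"
  have p0: "RUpL k v1 v eB \<in> a_pars X0" using p InvD(2)[OF I] by blast
  obtain cc bb m where L: "v1 = Orig cc" "eB = expn bb (fsort (lab bb))" "v = Orig m"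
      "(PRUp k, [cc], [m, bb]) \<in> links" "lab m = DUp k (lab cc) (lab bb)"
    using p0 by (cases rule: pars0_cases) auto
  have aA: "bb \<in> AUXV" using AUXV_I[OF L(4)] by simp
  have wfm: "wf (lab m)" using link_V[OF L(4)] wfV by auto
  have k: "combok X ?o v1" using InvD(3)[OF I c] .
  have ve: "set (varl ev eB) = set (svars (fst (aj bb)))" using L(2) varl_eA by simp
  have oe: "origs eB = []" using L(2) by (simp add: expn_facts)
  have dv: "distinct (varl ev ?o)" using combokD(2)[OF k] .
  have dj: "set (svars (fst (aj bb))) \<inter> set (varl ev ?n) = {}" using dv ve by auto
  have vs: "set (varl ev ?o) = set (svars (fst (aj bb))) \<union> set (varl ev ?n)" using ve by auto
  have C: "a_combs ?X' = insert (?n, v) (a_combs X - {(?o, v1)})" by simp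
  have Z: "ZZ X \<subseteq> ZZ ?X'" by (rule U_lemma[OF C]) (use c in auto)
  have ez: "set (svars (fst (aj bb))) \<subseteq> ZZ ?X'" by (rule ez_lemma[OF I c _ dj C]) (use vs in auto)
  have ok: "combok ?X' ?n v"
  proof (rule combokI)
    show "\<exists>n. v = Orig n" using L(3) by blast
    show "distinct (varl ev ?n)" using dv by auto
    show "distinct (origs ?n)" using combokD(3)[OF k] oe by simp
    show "lsort vs ?n = vs v"
    proof -
      have "lsort vs ?o = vs v1" using combokD(4)[OF k] .
      then have "lsort vs a1 + fsort (lab bb) + lsort vs a2 = fsort (lab cc)" using L(1,2) by (simp add: vs_def expn_facts)
      then show ?thesis using L(3,5) by (simp add: vs_def)
    qed
    show "\<And>p. ISym (SVar p) \<in> set ?n \<Longrightarrow> p \<in> HV" using combokD(5)[OF k] by auto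
    show "ovsub ?n" by (rule ovsub_remove[OF aA combokD(6)[OF k] vs dj])
    have M': "Mn (ZZ ?X') ?o (Orig cc)" using Mn_mono[OF combokD(7)[OF k] Z] L(1) by simp
    show "Mn (ZZ ?X') ?n v"
      using Mn_up[OF M' L(2) aA L(5) wfm sel dv combokD(6)[OF k] ez] L(3) by simp
  qed
  have C': "a_combs ?X' = insert (?n, v) (a_combs X - {(?o, v1)})" by simp
  show ?thesis
  proof (rule step_rpar[OF I p _ c C' _ _ ok])
    show "rmain (RUpL k v1 v eB) = Some v" by simp
    show "set (varl ev ?n) \<subseteq> set (varl ev ?o)" by auto
    show "HV \<inter> set (varl ev ?o) \<subseteq> set (varl ev ?n)" using vs HV_aj[of bb] by auto
    show "IV x \<in> set ?o" if "IV x \<in> set ?n" for x using that by auto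
  qed auto
qed

lemma Mn_down:
  assumes M: "Mn Z (e1 @ b @ e2) (Orig cc)" and eA: "e1 @ ISym Sep # e2 = expn a (fsort (lab a))" and aA: "a \<in> AUXV"
    and lm: "lab m = DDown k (lab a) (lab cc)" and wfm: "wf (lab m)" and sel: "sel_ok vs k e1 e2"
    and dv: "distinct (varl ev (e1 @ b @ e2))" and ov: "ovsub (e1 @ b @ e2)"
    and ez: "set (svars (fst (aj a))) \<subseteq> Z"
  shows "Mn Z b (Orig m)"
  unfolding Mn_def
proof (intro allI impI)
  let ?o = "e1 @ b @ e2"
  fix f assume g: "good Z f b"
  have ve: "set (varl ev (e1 @ e2)) = set (svars (fst (aj a)))" using varl_eA[of a] eA[symmetric] by simp
  have o0: "origs (e1 @ ISym Sep # e2) = []" by (metis eA expn_facts(2))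
  then have oe: "origs e1 = []" "origs e2 = []" by simp_all
  have ge: "good Z f ?o" by (rule good_mono[OF g]) (use oe ve ez in auto)
  have D: "ND (Hc ?o + Sc f ?o) (inst ev f ?o, lab cc)" using M ge unfolding Mn_def by auto
  have dj: "set (svars (fst (aj a))) \<inter> set (varl ev b) = {}" using dv ve by auto
  have vs: "set (varl ev ?o) = set (svars (fst (aj a))) \<union> set (varl ev b)" using ve by auto
  have ovb: "ovsub b" by (rule ovsub_remove[OF aA ov vs dj])
  have hc: "Hc ?o = add_mset (aj a) (Hc b)" by (rule Hc_eA[OF aA ovb vs dj])
  have ia: "inst ev f e1 @ Sep # inst ev f e2 = fst (aj a)" using inst_eA[of f a] eA[symmetric] by simp
  have sc: "selc k (ssort (inst ev f e1)) (ssort (inst ev f e2))"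
  proof -
    have "ssort (inst ev f e1) = lsort vs e1" "ssort (inst ev f e2) = lsort vs e2"
      using oe by (simp_all add: vs_def ssort_inst)
    then show ?thesis using sel by (simp add: sel_ok_selc)
  qed
  have sw: "swrap k (fst (aj a)) (inst ev f b) = inst ev f e1 @ inst ev f b @ inst ev f e2"
    "wrap_defined k (fst (aj a))" using swrap_split[OF sc] ia by auto
  have D': "ND (add_mset (fst (aj a), lab a) (Hc b + Sc f b)) (swrap k (fst (aj a)) (inst ev f b), lab cc)"
    using D hc oe Sc_noorig[OF oe(1), of f] Sc_noorig[OF oe(2), of f] aj_split[of a] sw(1) by simp
  have fr: "set (svars (fst (aj a))) \<inter> cvars (Hc b + Sc f b) = {}"
  proof -
    have "cvars (Sc f b) \<inter> Z = {}" using good_cvars[OF g] by (auto simp: cvars_Sc)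
    then show ?thesis using Hc_cvars[OF ovb] dj ez by auto
  qed
  have "ND (Hc b + Sc f b) (inst ev f b, DDown k (lab a) (lab cc))"
    by (rule ND.downI[OF D' sw(2) _ fr]) (use hyp_label_aj[of a "fsort (lab a)"] wfm lm in \<open>simp_all add: aj_def\<close>)
  then show "ND (Hc b + Sc f b) (inst ev f b, labv (Orig m))" using lm by simp
qed

lemma step_down:
  assumes I: "Inv X" and p: "RDownL k v1 eA v \<in> a_pars X" and e: "eA = e1 @ [ISym Sep] @ e2"
    and sel: "sel_ok vs k e1 e2" and c: "(e1 @ b @ e2, v1) \<in> a_combs X"
  shows "Inv (X\<lparr>a_pars := a_pars X - {RDownL k v1 eA v},
          a_combs := insert (b, v) (a_combs X - {(e1 @ b @ e2, v1)})\<rparr>)"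
    (is "Inv ?X'")
proof -
  let ?o = "e1 @ b @ e2"
  have p0: "RDownL k v1 eA v \<in> a_pars X0" using p InvD(2)[OF I] by blast
  obtain cc a m where L: "v1 = Orig cc" "eA = expn a (fsort (lab a))" "v = Orig m"
      "(PRDown k, [cc], [a, m]) \<in> links" "lab m = DDown k (lab a) (lab cc)"
    using p0 by (cases rule: pars0_cases) auto
  have eA': "e1 @ ISym Sep # e2 = expn a (fsort (lab a))" using L(2) e by simp
  have aA: "a \<in> AUXV" using AUXV_I[OF L(4)] by simp
  have wfm: "wf (lab m)" using link_V[OF L(4)] wfV by auto
  have k: "combok X ?o v1" using InvD(3)[OF I c] .
  have ve: "set (varl ev (e1 @ e2)) = set (svars (fst (aj a)))" using varl_eA[of a] eA'[symmetric] by simp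
  have o0: "origs (e1 @ ISym Sep # e2) = []" by (metis eA' expn_facts(2))
  then have oe: "origs e1 = []" "origs e2 = []" by simp_all
  have dv: "distinct (varl ev ?o)" using combokD(2)[OF k] .
  have dj: "set (svars (fst (aj a))) \<inter> set (varl ev b) = {}" using dv ve by auto
  have vs: "set (varl ev ?o) = set (svars (fst (aj a))) \<union> set (varl ev b)" using ve by auto
  have C: "a_combs ?X' = insert (b, v) (a_combs X - {(?o, v1)})" by simp
  have Z: "ZZ X \<subseteq> ZZ ?X'" by (rule U_lemma[OF C]) (use c in auto)
  have ez: "set (svars (fst (aj a))) \<subseteq> ZZ ?X'" by (rule ez_lemma[OF I c _ dj C]) (use vs in auto)
  have ok: "combok ?X' b v"
  proof (rule combokI)
    show "\<exists>n. v = Orig n" using L(3) by blast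
    show "distinct (varl ev b)" using dv by auto
    show "distinct (origs b)" using combokD(3)[OF k] oe by simp
    show "lsort vs b = vs v"
    proof -
      have "lsort vs ?o = vs v1" using combokD(4)[OF k] .
      then have 1: "lsort vs e1 + lsort vs b + lsort vs e2 = fsort (lab cc)" using L(1) by (simp add: vs_def)
      have "lsort (avsort lab) (e1 @ ISym Sep # e2) = fsort (lab a)" using eA' expn_facts(4) by metis
      then have 2: "lsort vs e1 + 1 + lsort vs e2 = fsort (lab a)" by (simp add: vs_def)
      show ?thesis using L(3,5) 1 2 by (simp add: vs_def)
    qed
    show "\<And>p. ISym (SVar p) \<in> set b \<Longrightarrow> p \<in> HV" using combokD(5)[OF k] by auto
    show "ovsub b" by (rule ovsub_remove[OF aA combokD(6)[OF k] vs dj])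
    have M': "Mn (ZZ ?X') ?o (Orig cc)" using Mn_mono[OF combokD(7)[OF k] Z] L(1) by simp
    show "Mn (ZZ ?X') b v"
      using Mn_down[OF M' eA' aA L(5) wfm sel dv combokD(6)[OF k] ez] L(3) by simp
  qed
  show ?thesis
  proof (rule step_rpar[OF I p _ c C _ _ ok])
    show "rmain (RDownL k v1 eA v) = Some v" by simp
    show "set (varl ev b) \<subseteq> set (varl ev ?o)" by auto
    show "HV \<inter> set (varl ev ?o) \<subseteq> set (varl ev b)" using vs HV_aj[of a] by auto
    show "IV x \<in> set ?o" if "IV x \<in> set b" for x using that by auto
  qed auto
qed

end

context PSL
begin

lemma aj_disj: "a \<noteq> bb \<Longrightarrow> set (svars (fst (aj a))) \<inter> set (svars (fst (aj bb))) = {}"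
  by (auto simp: svars_aj ev_inj simp del: upt_Suc)

lemma Mn_lpar:
  assumes M: "Mn Z (g1 @ mid @ g2) vo" and aA: "a \<in> AUXV" and bA: "bb \<in> AUXV" and ab: "a \<noteq> bb"
    and vm: "set (varl ev mid) = set (svars (fst (aj a))) \<union> set (svars (fst (aj bb)))"
    and om: "origs mid = []"
    and dv: "distinct (varl ev (g1 @ mid @ g2))" and ov: "ovsub (g1 @ mid @ g2)"
    and dn: "distinct (origs (g1 @ IV (Orig cc) # g2))"
    and ez: "set (svars (fst (aj a))) \<subseteq> Z" "set (svars (fst (aj bb))) \<subseteq> Z"
    and rule: "\<And>\<Gamma> \<Delta> \<delta>. ND \<Delta> (\<delta>, lab cc) \<Longrightarrow>
        ND (\<Gamma> + {#aj a, aj bb#}) (inst ev f g1 @ inst ev f mid @ inst ev f g2, labv vo) \<Longrightarrow>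
        set (svars (fst (aj a))) \<inter> set (svars (fst (aj bb))) = {} \<Longrightarrow>
        (set (svars (fst (aj a))) \<union> set (svars (fst (aj bb)))) \<inter> cvars \<Gamma> = {} \<Longrightarrow>
        cvars \<Gamma> \<inter> cvars \<Delta> = {} \<Longrightarrow> ND (\<Gamma> + \<Delta>) (inst ev f g1 @ \<delta> @ inst ev f g2, labv vo)"
    and g: "good Z f (g1 @ IV (Orig cc) # g2)"
  shows "ND (Hc (g1 @ IV (Orig cc) # g2) + Sc f (g1 @ IV (Orig cc) # g2)) (inst ev f (g1 @ IV (Orig cc) # g2), labv vo)"
proof -
  let ?n = "g1 @ IV (Orig cc) # g2"
  let ?o = "g1 @ mid @ g2"
  let ?A = "set (svars (fst (aj a)))" and ?B = "set (svars (fst (aj bb)))"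
  have ge: "good Z f ?o" by (rule good_mono[OF g]) (use om vm ez in auto)
  have D: "ND (Hc ?o + Sc f ?o) (inst ev f ?o, labv vo)" using M ge unfolding Mn_def by auto
  have vn: "set (varl ev ?n) = set (varl ev (g1 @ g2))" by simp
  have dAB: "?A \<inter> ?B = {}" "?A \<inter> set (varl ev ?n) = {}" "?B \<inter> set (varl ev ?n) = {}"
    using dv vm aj_disj[OF ab] by auto
  have vs1: "set (varl ev ?o) = ?A \<union> (?B \<union> set (varl ev ?n))" using vm by auto
  let ?y = "g1 @ expn bb (fsort (lab bb)) @ g2"
  have vy: "set (varl ev ?y) = ?B \<union> set (varl ev ?n)" using varl_eA[of bb] by auto
  have vs1': "set (varl ev ?o) = ?A \<union> set (varl ev ?y)" using vs1 vy by auto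
  have dy: "?A \<inter> set (varl ev ?y) = {}" using dAB vy by auto
  have ovy: "ovsub ?y" by (rule ovsub_remove[OF aA ov vs1' dy])
  have ovn: "ovsub ?n" by (rule ovsub_remove[OF bA ovy vy dAB(3)])
  have hc: "Hc ?o = Hc ?n + {#aj a, aj bb#}"
    using Hc_eA[OF aA ovy vs1' dy] Hc_eA[OF bA ovn vy dAB(3)] by simp
  let ?\<Gamma> = "Hc ?n + Sc f g1 + Sc f g2"
  have cc: "cc \<in> set (origs ?n)" by simp
  have Dc: "ND (fst (f cc)) (snd (f cc), lab cc)" using good_ND[OF g cc] .
  have D': "ND (?\<Gamma> + {#aj a, aj bb#}) (inst ev f g1 @ inst ev f mid @ inst ev f g2, labv vo)"
    using D hc Sc_noorig[OF om, of f] by (simp add: ac_simps)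
  have sZ: "cvars (Sc f g1 + Sc f g2) \<inter> (Z \<union> set (varl ev ?n)) = {}"
    using good_cvars[OF g] by (auto simp: cvars_Sc)
  have f1: "(?A \<union> ?B) \<inter> cvars ?\<Gamma> = {}"
    using Hc_cvars[OF ovn] dAB ez sZ by auto
  have f2: "cvars ?\<Gamma> \<inter> cvars (fst (f cc)) = {}"
  proof -
    have "cvars (fst (f cc)) \<inter> set (varl ev ?n) = {}" using good_cvars[OF g cc] by blast
    moreover have "cvars (fst (f m)) \<inter> cvars (fst (f cc)) = {}" if "m \<in> set (origs g1) \<or> m \<in> set (origs g2)" for m
      using good_pair[OF g, of m cc] that dn by auto
    ultimately show ?thesis using Hc_cvars[OF ovn] by (auto simp: cvars_Sc)
  qed
  have "ND (?\<Gamma> + fst (f cc)) (inst ev f g1 @ snd (f cc) @ inst ev f g2, labv vo)"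
    by (rule rule[OF Dc D' dAB(1) f1 f2])
  then show ?thesis by (simp add: ac_simps)
qed

lemma step_lpar2:
  assumes I: "Inv X" and p: "p \<in> a_pars X" and lp: "lprem p = Some (Orig cc)"
    and c: "(g1 @ mid @ g2, vo) \<in> a_combs X"
    and aA: "a \<in> AUXV" and bA: "bb \<in> AUXV" and ab: "a \<noteq> bb"
    and vm: "set (varl ev mid) = set (svars (fst (aj a))) \<union> set (svars (fst (aj bb)))"
    and om: "origs mid = []"
    and lsm: "lsort vs mid = fsort (lab cc)"
    and MM: "\<And>Z f. Mn Z (g1 @ mid @ g2) vo \<Longrightarrow> distinct (varl ev (g1 @ mid @ g2)) \<Longrightarrow> ovsub (g1 @ mid @ g2)
        \<Longrightarrow> distinct (origs (g1 @ IV (Orig cc) # g2))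
        \<Longrightarrow> set (svars (fst (aj a))) \<subseteq> Z \<Longrightarrow> set (svars (fst (aj bb))) \<subseteq> Z
        \<Longrightarrow> Mn Z (g1 @ IV (Orig cc) # g2) vo"
  shows "Inv (X\<lparr>a_pars := a_pars X - {p},
          a_combs := insert (g1 @ [IV (Orig cc)] @ g2, vo) (a_combs X - {(g1 @ mid @ g2, vo)})\<rparr>)"
    (is "Inv ?X'")
proof -
  let ?n = "g1 @ IV (Orig cc) # g2"
  let ?o = "g1 @ mid @ g2"
  let ?A = "set (svars (fst (aj a)))" and ?B = "set (svars (fst (aj bb)))"
  have k: "combok X ?o vo" using InvD(3)[OF I c] .
  have dv: "distinct (varl ev ?o)" using combokD(2)[OF k] .
  have dAB: "?A \<inter> ?B = {}" "?A \<inter> set (varl ev ?n) = {}" "?B \<inter> set (varl ev ?n) = {}"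
    using dv vm aj_disj[OF ab] by auto
  have vs1: "set (varl ev ?o) = ?A \<union> (?B \<union> set (varl ev ?n))" using vm by auto
  let ?y = "g1 @ expn bb (fsort (lab bb)) @ g2"
  have vy: "set (varl ev ?y) = ?B \<union> set (varl ev ?n)" using varl_eA[of bb] by auto
  have vs1': "set (varl ev ?o) = ?A \<union> set (varl ev ?y)" using vs1 vy by auto
  have dy: "?A \<inter> set (varl ev ?y) = {}" using dAB vy by auto
  have ovy: "ovsub ?y" by (rule ovsub_remove[OF aA combokD(6)[OF k] vs1' dy])
  have ovn: "ovsub ?n" by (rule ovsub_remove[OF bA ovy vy dAB(3)])
  have C: "a_combs ?X' = insert (?n, vo) (a_combs X - {(?o, vo)})" by simp
  have Z: "ZZ X \<subseteq> ZZ ?X'" by (rule U_lemma[OF C]) (use c vm in auto)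
  have ez: "?A \<subseteq> ZZ ?X'" "?B \<subseteq> ZZ ?X'"
    by (rule ez_lemma[OF I c _ _ C]; use vs1 dAB in auto)+
  have ncc: "cc \<notin> set (origs ?o)" using InvD(5)[OF I p lp c] by (simp add: origs_mem)
  have dn: "distinct (origs ?n)" using combokD(3)[OF k] ncc om by auto
  have ok: "combok ?X' ?n vo"
  proof (rule combokI)
    show "\<exists>n. vo = Orig n" using combokD(1)[OF k] .
    show "distinct (varl ev ?n)" using dv by auto
    show "distinct (origs ?n)" by (rule dn)
    show "lsort vs ?n = vs vo" using combokD(4)[OF k] lsm by (simp add: vs_def)
    show "\<And>q. ISym (SVar q) \<in> set ?n \<Longrightarrow> q \<in> HV" using combokD(5)[OF k] by auto
    show "ovsub ?n" by (rule ovn)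
    show "Mn (ZZ ?X') ?n vo"
      by (rule MM[OF Mn_mono[OF combokD(7)[OF k] Z] dv combokD(6)[OF k] dn ez])
  qed
  show ?thesis
  proof (rule step_lpar[OF I p lp c C _ _ ok])
    show "set (varl ev ?n) \<subseteq> set (varl ev ?o)" by auto
    show "HV \<inter> set (varl ev ?o) \<subseteq> set (varl ev ?n)" using vs1 HV_aj[of a] HV_aj[of bb] by auto
    show "IV x \<in> set ?o \<or> x = Orig cc" if "IV x \<in> set ?n" for x using that by auto
  qed auto
qed


lemma step_prod:
  assumes I: "Inv X" and p: "LProdL v1 eA eB \<in> a_pars X" and c: "(g1 @ eA @ eB @ g2, v2) \<in> a_combs X"
  shows "Inv (X\<lparr>a_pars := a_pars X - {LProdL v1 eA eB},
          a_combs := insert (g1 @ [IV v1] @ g2, v2) (a_combs X - {(g1 @ eA @ eB @ g2, v2)})\<rparr>)"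
proof -
  have p0: "LProdL v1 eA eB \<in> a_pars X0" using p InvD(2)[OF I] by blast
  obtain cc a bb where L: "v1 = Orig cc" "eA = expn a (fsort (lab a))" "eB = expn bb (fsort (lab bb))"
      "(PLProd, [cc], [a, bb]) \<in> links" "lab cc = DProd (lab a) (lab bb)"
    using p0 by (cases rule: pars0_cases) auto
  have ab: "a \<noteq> bb" using link_ok[OF L(4)] by auto
  have aA: "a \<in> AUXV" "bb \<in> AUXV" using AUXV_I[OF L(4)] by auto
  have c': "(g1 @ (eA @ eB) @ g2, v2) \<in> a_combs X" using c by simp
  have vm: "set (varl ev (eA @ eB)) = set (svars (fst (aj a))) \<union> set (svars (fst (aj bb)))"
    using L(2,3) varl_eA by simp
  have om: "origs (eA @ eB) = []" using L(2,3) by (simp add: expn_facts)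
  have lsm: "lsort vs (eA @ eB) = fsort (lab cc)" using L(2,3,5) by (simp add: vs_def expn_facts)
  have ie: "inst ev f eA = fst (aj a)" "inst ev f eB = fst (aj bb)" for f using L(2,3) inst_eA by simp_all
  have "Inv (X\<lparr>a_pars := a_pars X - {LProdL v1 eA eB},
          a_combs := insert (g1 @ [IV (Orig cc)] @ g2, v2) (a_combs X - {(g1 @ (eA @ eB) @ g2, v2)})\<rparr>)"
  proof (rule step_lpar2[OF I p _ c' aA ab vm om lsm])
    show "lprem (LProdL v1 eA eB) = Some (Orig cc)" using L(1) by simp
    fix Z
    assume M: "Mn Z (g1 @ (eA @ eB) @ g2) v2" and dv: "distinct (varl ev (g1 @ (eA @ eB) @ g2))"
      and ov: "ovsub (g1 @ (eA @ eB) @ g2)" and dn: "distinct (origs (g1 @ IV (Orig cc) # g2))"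
      and ez: "set (svars (fst (aj a))) \<subseteq> Z" "set (svars (fst (aj bb))) \<subseteq> Z"
    show "Mn Z (g1 @ IV (Orig cc) # g2) v2"
      unfolding Mn_def
    proof (intro allI impI)
      fix f assume g: "good Z f (g1 @ IV (Orig cc) # g2)"
      show "ND (Hc (g1 @ IV (Orig cc) # g2) + Sc f (g1 @ IV (Orig cc) # g2)) (inst ev f (g1 @ IV (Orig cc) # g2), labv v2)"
      proof (rule Mn_lpar[OF M aA ab vm om dv ov dn ez _ g])
        fix \<Gamma> \<Delta> \<delta>
        assume D1: "ND \<Delta> (\<delta>, lab cc)"
          and D2: "ND (\<Gamma> + {#aj a, aj bb#}) (inst ev f g1 @ inst ev f (eA @ eB) @ inst ev f g2, labv v2)"
          and d1: "set (svars (fst (aj a))) \<inter> set (svars (fst (aj bb))) = {}"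
          and d2: "(set (svars (fst (aj a))) \<union> set (svars (fst (aj bb)))) \<inter> cvars \<Gamma> = {}"
          and d3: "cvars \<Gamma> \<inter> cvars \<Delta> = {}"
        have D2': "ND (\<Gamma> + {#(fst (aj a), lab a), (fst (aj bb), lab bb)#})
             (inst ev f g1 @ fst (aj a) @ fst (aj bb) @ inst ev f g2, labv v2)"
          using D2 ie aj_split[of a] aj_split[of bb] by simp
        show "ND (\<Gamma> + \<Delta>) (inst ev f g1 @ \<delta> @ inst ev f g2, labv v2)"
          by (rule ND.prodE[OF D1[unfolded L(5)] D2' _ _ _ _ d3])
            (use hyp_label_aj d1 d2 in \<open>auto simp: aj_def\<close>)
      qed
    qed
  qed
  then show ?thesis using L(1) by simp
qed

lemma step_wrap:
  assumes I: "Inv X" and p: "LWrapL k v1 eA eB \<in> a_pars X" and e: "eA = e1 @ [ISym Sep] @ e2"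
    and sel: "sel_ok vs k e1 e2" and c: "(g1 @ e1 @ eB @ e2 @ g2, v2) \<in> a_combs X"
  shows "Inv (X\<lparr>a_pars := a_pars X - {LWrapL k v1 eA eB},
          a_combs := insert (g1 @ [IV v1] @ g2, v2) (a_combs X - {(g1 @ e1 @ eB @ e2 @ g2, v2)})\<rparr>)"
proof -
  have p0: "LWrapL k v1 eA eB \<in> a_pars X0" using p InvD(2)[OF I] by blast
  obtain cc a bb where L: "v1 = Orig cc" "eA = expn a (fsort (lab a))" "eB = expn bb (fsort (lab bb))"
      "(PLWrap k, [cc], [a, bb]) \<in> links" "lab cc = DWrap k (lab a) (lab bb)"
    using p0 by (cases rule: pars0_cases) auto
  have eA': "e1 @ ISym Sep # e2 = expn a (fsort (lab a))" using L(2) e by simp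
  have ab: "a \<noteq> bb" using link_ok[OF L(4)] by auto
  have aA: "a \<in> AUXV" "bb \<in> AUXV" using AUXV_I[OF L(4)] by auto
  have c': "(g1 @ (e1 @ eB @ e2) @ g2, v2) \<in> a_combs X" using c by simp
  have ve: "set (varl ev (e1 @ e2)) = set (svars (fst (aj a)))" using varl_eA[of a] eA'[symmetric] by simp
  have vm: "set (varl ev (e1 @ eB @ e2)) = set (svars (fst (aj a))) \<union> set (svars (fst (aj bb)))"
    using ve L(3) varl_eA[of bb] by auto
  have o0: "origs (e1 @ ISym Sep # e2) = []" by (metis eA' expn_facts(2))
  then have oe: "origs e1 = []" "origs e2 = []" by simp_all
  have om: "origs (e1 @ eB @ e2) = []" using oe L(3) by (simp add: expn_facts)
  have lsm: "lsort vs (e1 @ eB @ e2) = fsort (lab cc)"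
  proof -
    have "lsort (avsort lab) (e1 @ ISym Sep # e2) = fsort (lab a)" using eA' expn_facts(4) by metis
    then have "lsort vs e1 + 1 + lsort vs e2 = fsort (lab a)" by (simp add: vs_def)
    then show ?thesis using L(3,5) by (simp add: vs_def expn_facts)
  qed
  have ie: "inst ev f e1 @ Sep # inst ev f e2 = fst (aj a)" for f using inst_eA[of f a] eA'[symmetric] by simp
  have sc: "selc k (ssort (inst ev f e1)) (ssort (inst ev f e2))" for f
  proof -
    have "ssort (inst ev f e1) = lsort vs e1" "ssort (inst ev f e2) = lsort vs e2"
      using oe by (simp_all add: vs_def ssort_inst)
    then show ?thesis using sel by (simp add: sel_ok_selc)
  qed
  have sw: "swrap k (fst (aj a)) (fst (aj bb)) = inst ev f (e1 @ eB @ e2)" "wrap_defined k (fst (aj a))" for f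
    using swrap_split(1)[OF sc[of f], of "fst (aj bb)"] swrap_split(2)[OF sc[of f]] ie[of f] L(3) inst_eA[of f bb] by auto
  have "Inv (X\<lparr>a_pars := a_pars X - {LWrapL k v1 eA eB},
          a_combs := insert (g1 @ [IV (Orig cc)] @ g2, v2) (a_combs X - {(g1 @ (e1 @ eB @ e2) @ g2, v2)})\<rparr>)"
  proof (rule step_lpar2[OF I p _ c' aA ab vm om lsm])
    show "lprem (LWrapL k v1 eA eB) = Some (Orig cc)" using L(1) by simp
    fix Z
    assume M: "Mn Z (g1 @ (e1 @ eB @ e2) @ g2) v2" and dv: "distinct (varl ev (g1 @ (e1 @ eB @ e2) @ g2))"
      and ov: "ovsub (g1 @ (e1 @ eB @ e2) @ g2)" and dn: "distinct (origs (g1 @ IV (Orig cc) # g2))"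
      and ez: "set (svars (fst (aj a))) \<subseteq> Z" "set (svars (fst (aj bb))) \<subseteq> Z"
    show "Mn Z (g1 @ IV (Orig cc) # g2) v2"
      unfolding Mn_def
    proof (intro allI impI)
      fix f assume g: "good Z f (g1 @ IV (Orig cc) # g2)"
      show "ND (Hc (g1 @ IV (Orig cc) # g2) + Sc f (g1 @ IV (Orig cc) # g2)) (inst ev f (g1 @ IV (Orig cc) # g2), labv v2)"
      proof (rule Mn_lpar[OF M aA ab vm om dv ov dn ez _ g])
        fix \<Gamma> \<Delta> \<delta>
        assume D1: "ND \<Delta> (\<delta>, lab cc)"
          and D2: "ND (\<Gamma> + {#aj a, aj bb#}) (inst ev f g1 @ inst ev f (e1 @ eB @ e2) @ inst ev f g2, labv v2)"
          and d1: "set (svars (fst (aj a))) \<inter> set (svars (fst (aj bb))) = {}"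
          and d2: "(set (svars (fst (aj a))) \<union> set (svars (fst (aj bb)))) \<inter> cvars \<Gamma> = {}"
          and d3: "cvars \<Gamma> \<inter> cvars \<Delta> = {}"
        have D2': "ND (\<Gamma> + {#(fst (aj a), lab a), (fst (aj bb), lab bb)#})
             (inst ev f g1 @ swrap k (fst (aj a)) (fst (aj bb)) @ inst ev f g2, labv v2)"
          using D2 sw(1)[of f] aj_split[of a] aj_split[of bb] by simp
        show "ND (\<Gamma> + \<Delta>) (inst ev f g1 @ \<delta> @ inst ev f g2, labv v2)"
          by (rule ND.wrapE[OF D1[unfolded L(5)] D2' sw(2) _ _ _ _ d3])
            (use hyp_label_aj d1 d2 in \<open>auto simp: aj_def\<close>)
      qed
    qed
  qed
  then show ?thesis using L(1) by simp
qed

end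

context PSL
begin

lemma Inv_step:
  assumes c: "contract (avsort lab) X Y" and I: "Inv X"
  shows "Inv Y"
  using c
proof (cases rule: contract.cases)
  case (plus a1 w a2 v b)
  then show ?thesis using step_plus[OF I] by simp
next
  case (times k v1 v2 v a1 a2 b)
  then show ?thesis using step_times[OF I] by (simp add: vs_def)
next
  case (under v1 eA v b)
  then show ?thesis using step_under[OF I] by simp
next
  case (over v1 v eB b)
  then show ?thesis using step_over[OF I] by simp
next
  case (up k v1 v eB a1 a2)
  then show ?thesis using step_up[OF I] by (simp add: vs_def)
next
  case (down k v1 eA v e1 e2 b)
  then show ?thesis using step_down[OF I] by (simp add: vs_def)
next
  case (prod v1 eA eB g1 g2 v2)
  then show ?thesis using step_prod[OF I] by simp
next
  case (wrap k v1 eA eB e1 e2 g1 g2 v2)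
  then show ?thesis using step_wrap[OF I] by (simp add: vs_def)
qed

lemma Inv_reach: "(contract (avsort lab))\<^sup>*\<^sup>* X0 Y \<Longrightarrow> Inv Y"
proof (induction rule: rtranclp_induct)
  case base then show ?case by (rule Inv0)
next
  case (step y z) then show ?case using Inv_step by blast
qed

lemma final:
  assumes I: "Inv \<lparr> a_combs = {(map ISym \<gamma>, Orig c)}, a_tens = {}, a_pars = {} \<rparr>" (is "Inv ?X")
  shows "ND (mset (map (\<lambda>h. (hl h, lab h)) hs)) (\<gamma>, lab c)"
proof -
  let ?p = "map ISym \<gamma>"
  have k: "combok ?X ?p (Orig c)" using InvD(3)[OF I] by simp
  have hv: "HV \<subseteq> set (svars \<gamma>)" using InvD(8)[OF I] by simp
  have sv: "set (svars \<gamma>) \<subseteq> HV"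
  proof
    fix x assume "x \<in> set (svars \<gamma>)"
    then have "ISym (SVar x) \<in> set ?p" using ISym_SVar_in_map by blast
    then show "x \<in> HV" using combokD(5)[OF k] by blast
  qed
  have e: "{j \<in> Jall. ovl j ?p} = HJ"
  proof
    show "{j \<in> Jall. ovl j ?p} \<subseteq> HJ"
    proof
      fix j assume j: "j \<in> {j \<in> Jall. ovl j ?p}"
      show "j \<in> HJ"
      proof (rule ccontr)
        assume "j \<notin> HJ"
        then obtain u where "j = aj u" using j by (auto simp: Jall_def)
        then have "set (svars (fst j)) \<subseteq> EVR" using aj_EVR by simp
        then show False using j sv HV_EVR by (auto simp: ovl_def)
      qed
    qed
    show "HJ \<subseteq> {j \<in> Jall. ovl j ?p}"
    proof
      fix j assume j: "j \<in> HJ"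
      then obtain h where h: "h \<in> set hs" "j = (hl h, lab h)" by (auto simp: HJ_def)
      have "set (svars (hl h)) \<subseteq> HV" using h by (auto simp: HV_def)
      moreover have "svars (hl h) \<noteq> []" using hl_ok h by blast
      ultimately have "set (svars (hl h)) \<inter> set (svars \<gamma>) \<noteq> {}" 
      proof -
        assume a: "set (svars (hl h)) \<subseteq> HV" "svars (hl h) \<noteq> []"
        obtain x where "x \<in> set (svars (hl h))" using a(2) by (cases "svars (hl h)") auto
        then show ?thesis using a(1) hv by blast
      qed
      then have "ovl j ?p" using h by (auto simp: ovl_def)
      then show "j \<in> {j \<in> Jall. ovl j ?p}" using j by (simp add: Jall_def)
    qed
  qed
  have dm: "distinct (map (\<lambda>h. (hl h, lab h)) hs)"
  proof -
    have "inj_on (\<lambda>h. (hl h, lab h)) (set hs)"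
    proof (rule inj_onI)
      fix x y assume "x \<in> set hs" "y \<in> set hs" "(hl x, lab x) = (hl y, lab y)"
      then show "x = y" using hl_disj[of x y] hl_ok[of x] by auto
    qed
    then show ?thesis using dhs by (simp add: distinct_map)
  qed
  have hc: "Hc ?p = mset (map (\<lambda>h. (hl h, lab h)) hs)"
    unfolding Hc_def e HJ_def using dm by (metis list.set_map mset_set_set)
  have "good (ZZ ?X) (\<lambda>_. ({#}, [])) ?p" by (simp add: good_def)
  then have "ND (Hc ?p + Sc (\<lambda>_. ({#}, [])) ?p) (inst ev (\<lambda>_. ({#}, [])) ?p, labv (Orig c))"
    using combokD(7)[OF k] unfolding Mn_def by blast
  then show ?thesis using hc by (simp add: Sc_def)
qed

end

theorem lemma2:
  fixes V :: "nat set" and lab :: "nat \<Rightarrow> formula" and links :: "link set"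
    and hs :: "nat list" and hl :: "nat \<Rightarrow> str" and c :: nat and \<gamma> :: str
  assumes "proof_structure V lab links"
    and "distinct hs" and "set hs = ps_hyps V links"
    and "ps_concls V links = {c}"
    and "\<forall>h\<in>set hs. is_hyp_label (hl h) (fsort (lab h))"
    and "distinct (concat (map (\<lambda>h. svars (hl h)) hs))"
    and "(contract (avsort lab))\<^sup>*\<^sup>* (aps_of V lab links hl)
           \<lparr> a_combs = {(map ISym \<gamma>, Orig c)}, a_tens = {}, a_pars = {} \<rparr>"
  shows "ND (mset (map (\<lambda>h. (hl h, lab h)) hs)) (\<gamma>, lab c)"
proof -
  interpret P: PSL V lab links hs hl
    by unfold_locales (use assms in auto)
  show ?thesis
    by (rule P.final, rule P.Inv_reach) (use assms(7) in \<open>simp add: P.X0_def\<close>)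
qed


end
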